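(* Let $A,X^1,\ldots,X^m\in M_n(\mathbb{C})$ and $1\le m\le k\le n$. Then $$D^m\otimes^k(A)(X^1,\ldots,X^m)=\sum_{\sigma\in S_m}\sum_{\substack{j_1,\ldots,j_{m+1}\ge0\\ j_1+\cdots+j_{m+1}=k-m}}(\otimes^{j_1}A)\otimes X^{\sigma(1)}\otimes(\otimes^{j_2}A)\otimes X^{\sigma(2)}\otimes\cdots\otimes X^{\sigma(m)}\otimes(\otimes^{j_{m+1}}A),$$ and consequently $$\|D^m\otimes^kA\|=\frac{k!}{(k-m)!}\|A\|^{k-m}.$$
   Context: $\otimes^kA$ is the $k$-fold tensor power of $A$ acting on $\otimes^k\mathbb{C}^n$, and $\otimes^0A$ is the empty factor (omitted). $D^m\otimes^k(A)(X^1,\ldots,X^m)=\frac{\partial^m}{\partial t_1\cdots\partial t_m}\big|_{t=0}\otimes^k(A+t_1X^1+\cdots+t_mX^m)$. $\|\cdot\|$ on matrices/operators is the operator (spectral) norm, and for the $m$-linear map $D^m\otimes^kA$, $\|D^m\otimes^kA\|=\sup_{\|X^1\|=\cdots=\|X^m\|=1}\|D^m\otimes^k(A)(X^1,\ldots,X^m)\|$. *)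

theory Defs
  imports "HOL-Analysis.Analysis" "Jordan_Normal_Form.Matrix"
begin

definition kron :: "complex mat \<Rightarrow> complex mat \<Rightarrow> complex mat" where
  "kron A B = mat (dim_row A * dim_row B) (dim_col A * dim_col B)
     (\<lambda>(i, j). A $$ (i div dim_row B, j div dim_col B) * B $$ (i mod dim_row B, j mod dim_col B))"

fun tpow :: "nat \<Rightarrow> complex mat \<Rightarrow> complex mat" where
  "tpow 0 A = 1\<^sub>m 1"
| "tpow (Suc k) A = kron A (tpow k A)"

definition vnorm :: "complex vec \<Rightarrow> real" where
  "vnorm x = sqrt (\<Sum>i<dim_vec x. (cmod (x $ i))\<^sup>2)"

definition opnorm :: "complex mat \<Rightarrow> real" where
  "opnorm M = Sup {vnorm (M *\<^sub>v x) | x. x \<in> carrier_vec (dim_col M) \<and> vnorm x = 1}"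

definition mderiv0 :: "(real \<Rightarrow> complex mat) \<Rightarrow> complex mat" where
  "mderiv0 B = mat (dim_row (B 0)) (dim_col (B 0))
     (\<lambda>ij. vector_derivative (\<lambda>t. B t $$ ij) (at 0))"

text \<open>Dm f A [X1,...,Xm] = d/dt1 ... d/dtm at t = 0 of f (A + t1 X1 + ... + tm Xm),
  written as iterated directional derivatives.\<close>
fun Dm :: "(complex mat \<Rightarrow> complex mat) \<Rightarrow> complex mat \<Rightarrow> complex mat list \<Rightarrow> complex mat" where
  "Dm f A [] = f A"
| "Dm f A (X # Xs) = mderiv0 (\<lambda>t. Dm f (A + complex_of_real t \<cdot>\<^sub>m X) Xs)"

definition Dm_norm :: "(complex mat \<Rightarrow> complex mat) \<Rightarrow> nat \<Rightarrow> nat \<Rightarrow> complex mat \<Rightarrow> real" where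
  "Dm_norm f n m A = Sup {opnorm (Dm f A Xs) | Xs. length Xs = m \<and>
      (\<forall>X\<in>set Xs. X \<in> carrier_mat n n \<and> opnorm X = 1)}"

text \<open>interl A [j1,...,j(m+1)] [Y1,...,Ym] =
  (tpow j1 A) (x) Y1 (x) (tpow j2 A) (x) ... (x) Ym (x) (tpow j(m+1) A).\<close>
fun interl :: "complex mat \<Rightarrow> nat list \<Rightarrow> complex mat list \<Rightarrow> complex mat" where
  "interl A [j] [] = tpow j A"
| "interl A (j # js) (Y # Ys) = kron (tpow j A) (kron Y (interl A js Ys))"
| "interl A _ _ = 1\<^sub>m 1"

end

theory Submission
  imports Defs
begin


lemma kron_dims[simp]: "dim_row (kron A B) = dim_row A * dim_row B" "dim_col (kron A B) = dim_col A * dim_col B"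
  by (simp_all add: kron_def)

lemma kron_carrier: "A \<in> carrier_mat a b \<Longrightarrow> B \<in> carrier_mat c d \<Longrightarrow> kron A B \<in> carrier_mat (a*c) (b*d)"
  by (simp add: kron_def)

lemma kron_index[simp]: "i < dim_row A * dim_row B \<Longrightarrow> j < dim_col A * dim_col B \<Longrightarrow>
  kron A B $$ (i,j) = A $$ (i div dim_row B, j div dim_col B) * B $$ (i mod dim_row B, j mod dim_col B)"
  by (simp add: kron_def)

lemma divmod_assoc_aux1:
  fixes i b c :: nat
  shows "(i mod (b*c)) div c = (i div c) mod b"
proof -
  have "i mod (c*b) = c * (i div c mod b) + i mod c" by (rule mod_mult2_eq)
  then show ?thesis
    by (cases "c = 0") (simp_all add: mult.commute)
qed

lemma divmod_assoc_aux2: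
  fixes i b c :: nat
  shows "(i mod (b*c)) mod c = i mod c"
  by (simp add: mod_mod_cancel)

lemma kron_assoc: "kron (kron A B) C = kron A (kron B C)"
proof (rule eq_matI)
  fix i j assume i: "i < dim_row (kron A (kron B C))" and j: "j < dim_col (kron A (kron B C))"
  let ?ra = "dim_row A" and ?rb = "dim_row B" and ?rc = "dim_row C"
  let ?ca = "dim_col A" and ?cb = "dim_col B" and ?cc = "dim_col C"
  have i': "i < ?ra * ?rb * ?rc" and j': "j < ?ca * ?cb * ?cc" using i j by (simp_all add: mult.assoc)
  have id: "i div ?rc < ?ra * ?rb" "j div ?cc < ?ca * ?cb"
    using i' j' by (simp_all add: less_mult_imp_div_less)
  have pos: "?rb * ?rc > 0" "?cb * ?cc > 0" using i j by (auto intro: gr0I)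
  have "kron (kron A B) C $$ (i,j) = A $$ (i div ?rc div ?rb, j div ?cc div ?cb) * B $$ (i div ?rc mod ?rb, j div ?cc mod ?cb)
     * C $$ (i mod ?rc, j mod ?cc)"
    using i' j' id by simp
  also have "\<dots> = A $$ (i div (?rb * ?rc), j div (?cb * ?cc)) * (B $$ (i mod (?rb * ?rc) div ?rc, j mod (?cb * ?cc) div ?cc)
     * C $$ (i mod (?rb * ?rc) mod ?rc, j mod (?cb * ?cc) mod ?cc))"
  proof -
    have "i div (?rb * ?rc) = i div ?rc div ?rb" "j div (?cb * ?cc) = j div ?cc div ?cb"
      by (metis div_mult2_eq mult.commute)+
    then show ?thesis by (simp add: divmod_assoc_aux1 divmod_assoc_aux2)
  qed
  also have "\<dots> = kron A (kron B C) $$ (i,j)"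
    using i j pos by (simp add: mult.assoc)
  finally show "kron (kron A B) C $$ (i,j) = kron A (kron B C) $$ (i,j)" .
qed (simp_all add: mult.assoc)

lemma kron_one_left: "kron (1\<^sub>m 1) M = M"
  by (rule eq_matI) auto

lemma kron_one_left'[simp]: "kron (1\<^sub>m (Suc 0)) M = M"
  using kron_one_left by simp

lemma kron_one_right: "kron M (1\<^sub>m 1) = M"
  by (rule eq_matI) auto

lemma kron_smult_left: "kron (c \<cdot>\<^sub>m A) B = c \<cdot>\<^sub>m kron A B"
  by (rule eq_matI) (auto simp: less_mult_imp_div_less)

lemma kron_smult_right: "kron A (c \<cdot>\<^sub>m B) = c \<cdot>\<^sub>m kron A B"
proof (rule eq_matI)
  fix i j assume i: "i < dim_row (c \<cdot>\<^sub>m kron A B)" and j: "j < dim_col (c \<cdot>\<^sub>m kron A B)"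
  then have "dim_row B > 0" "dim_col B > 0" by (auto intro: gr0I)
  then show "kron A (c \<cdot>\<^sub>m B) $$ (i, j) = (c \<cdot>\<^sub>m kron A B) $$ (i, j)" using i j by simp
qed simp_all

lemma tpow_carrier: "A \<in> carrier_mat n n \<Longrightarrow> tpow k A \<in> carrier_mat (n^k) (n^k)"
  by (induction k) (auto simp: kron_def)

lemma tpow_add: "tpow (a + b) A = kron (tpow a A) (tpow b A)"
  by (induction a) (simp_all add: kron_one_left kron_assoc)



fun P :: "nat \<Rightarrow> complex mat \<Rightarrow> complex mat list \<Rightarrow> complex mat" where
  "P 0 A [] = 1\<^sub>m 1"
| "P 0 A (Y#Ys) = 0\<^sub>m 1 1"
| "P (Suc k) A [] = kron A (P k A [])"
| "P (Suc k) A (Y#Ys) = kron Y (P k A Ys) + kron A (P k A (Y#Ys))"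

definition ins :: "nat \<Rightarrow> 'a \<Rightarrow> 'a list \<Rightarrow> 'a list" where
  "ins p X L = take p L @ X # drop p L"

lemma ins_set[simp]: "set (ins p X L) = insert X (set L)"
proof -
  have "set L = set (take p L) \<union> set (drop p L)" by (metis append_take_drop_id set_append)
  then show ?thesis unfolding ins_def by auto
qed

lemma ins_length[simp]: "length (ins p X L) = Suc (length L)"
  unfolding ins_def by simp

lemma ins_0[simp]: "ins 0 X L = X # L" unfolding ins_def by simp
lemma ins_Suc[simp]: "ins (Suc p) X (Y # L) = Y # ins p X L" unfolding ins_def by simp
lemma ins_nonnil[simp]: "ins p X L \<noteq> []" unfolding ins_def by simp

lemma P_carrier: "A \<in> carrier_mat n n \<Longrightarrow> \<forall>Y\<in>set Ys. Y \<in> carrier_mat n n \<Longrightarrow> P k A Ys \<in> carrier_mat (n^k) (n^k)"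
proof (induction k arbitrary: Ys)
  case 0
  then show ?case by (cases Ys) auto
next
  case (Suc k)
  show ?case
  proof (cases Ys)
    case Nil
    then show ?thesis using Suc kron_carrier[of A n n "P k A []" "n^k" "n^k"] by auto
  next
    case (Cons Z Zs)
    have "P k A Zs \<in> carrier_mat (n^k) (n^k)" "P k A (Z#Zs) \<in> carrier_mat (n^k) (n^k)"
      using Suc Cons by auto
    then have "kron Z (P k A Zs) \<in> carrier_mat (n^Suc k) (n^Suc k)" "kron A (P k A (Z#Zs)) \<in> carrier_mat (n^Suc k) (n^Suc k)"
      using Suc Cons kron_carrier by auto
    then show ?thesis using Cons by auto
  qed
qed

lemma P_nil: "P k A [] = tpow k A"
  by (induction k) auto

lemma P_0_cons: "Ys \<noteq> [] \<Longrightarrow> P 0 A Ys = 0\<^sub>m 1 1"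
  by (cases Ys) auto

lemma P_Suc_cons_index:
  assumes A: "A \<in> carrier_mat n n" and Y: "Y \<in> carrier_mat n n" and Ys: "\<forall>Z\<in>set Ys. Z \<in> carrier_mat n n"
    and i: "i < n^Suc k" and j: "j < n^Suc k"
  shows "P (Suc k) A (Y#Ys) $$ (i,j) = Y $$ (i div n^k, j div n^k) * P k A Ys $$ (i mod n^k, j mod n^k)
     + A $$ (i div n^k, j div n^k) * P k A (Y#Ys) $$ (i mod n^k, j mod n^k)"
proof -
  have c1: "P k A Ys \<in> carrier_mat (n^k) (n^k)" using P_carrier A Ys by blast
  have c2: "P k A (Y#Ys) \<in> carrier_mat (n^k) (n^k)" using P_carrier[of A n "Y#Ys"] A Y Ys by auto
  show ?thesis using c1 c2 A Y i j by (simp add: mult.commute)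
qed

lemma P_Suc_nil_index:
  assumes A: "A \<in> carrier_mat n n" and i: "i < n^Suc k" and j: "j < n^Suc k"
  shows "P (Suc k) A [] $$ (i,j) = A $$ (i div n^k, j div n^k) * P k A [] $$ (i mod n^k, j mod n^k)"
proof -
  have c1: "P k A [] \<in> carrier_mat (n^k) (n^k)" using P_carrier A by auto
  show ?thesis using c1 A i j by (simp add: mult.commute)
qed

lemma At_carrier: "A \<in> carrier_mat n n \<Longrightarrow> X \<in> carrier_mat n n \<Longrightarrow> A + c \<cdot>\<^sub>m X \<in> carrier_mat n n"
  by simp

lemma At_0: "A \<in> carrier_mat n n \<Longrightarrow> X \<in> carrier_mat n n \<Longrightarrow> A + complex_of_real 0 \<cdot>\<^sub>m X = A"
  by (rule eq_matI) auto

lemma At_index_deriv: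
  assumes A: "A \<in> carrier_mat n n" and X: "X \<in> carrier_mat n n" and a: "a < n" and b: "b < n"
  shows "((\<lambda>t. (A + complex_of_real t \<cdot>\<^sub>m X) $$ (a,b)) has_vector_derivative X $$ (a,b)) (at 0)"
proof -
  have e: "(\<lambda>t. (A + complex_of_real t \<cdot>\<^sub>m X) $$ (a,b)) = (\<lambda>t. A $$ (a,b) + complex_of_real t * X $$ (a,b))"
    using A X a b by auto
  have d: "((\<lambda>t. complex_of_real t) has_vector_derivative of_real 1) (at 0)"
    by (rule has_vector_derivative_of_real) (rule DERIV_ident)
  have "((\<lambda>t. A $$ (a,b) + complex_of_real t * X $$ (a,b)) has_vector_derivative (0 + of_real 1 * X $$ (a,b))) (at 0)"
    by (intro has_vector_derivative_add has_vector_derivative_const has_vector_derivative_mult_left d)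
  then show ?thesis unfolding e by simp
qed



lemma idx_bounds:
  fixes i n q :: nat
  assumes "i < n^Suc k"
  shows "i div n^k < n" "i mod n^k < n^k"
proof -
  have i: "i < n * n^k" using assms by simp
  show "i div n^k < n" using i by (simp add: less_mult_imp_div_less)
  have "n^k > 0" using i by (auto intro: gr0I)
  then show "i mod n^k < n^k" by simp
qed

lemma P_0_indep: "P 0 A Ys = P 0 B Ys"
  by (cases Ys) auto

lemma P_deriv:
  assumes A: "A \<in> carrier_mat n n" and X: "X \<in> carrier_mat n n"
  shows "\<forall>Y\<in>set Ys. Y \<in> carrier_mat n n \<Longrightarrow> i < n^k \<Longrightarrow> j < n^k \<Longrightarrow>
    ((\<lambda>t. P k (A + complex_of_real t \<cdot>\<^sub>m X) Ys $$ (i,j)) has_vector_derivative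
      (\<Sum>p<Suc (length Ys). P k A (ins p X Ys) $$ (i,j))) (at 0)"
proof (induction k arbitrary: Ys i j)
  case 0
  have e: "(\<lambda>t. P 0 (A + complex_of_real t \<cdot>\<^sub>m X) Ys $$ (i,j)) = (\<lambda>t. P 0 A Ys $$ (i,j))"
    using P_0_indep by metis
  have z: "P 0 A (ins p X Ys) $$ (i,j) = 0" for p
    using 0 by (simp add: P_0_cons)
  show ?case unfolding e z by simp
next
  case (Suc k)
  let ?q = "n^k"
  let ?At = "\<lambda>t. A + complex_of_real t \<cdot>\<^sub>m X"
  have Atc: "?At t \<in> carrier_mat n n" for t using A X by simp
  have ab: "i div ?q < n" "j div ?q < n" "i mod ?q < ?q" "j mod ?q < ?q"
    using Suc.prems idx_bounds by auto
  have dA: "((\<lambda>t. ?At t $$ (i div ?q, j div ?q)) has_vector_derivative X $$ (i div ?q, j div ?q)) (at 0)"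
    using At_index_deriv[OF A X ab(1,2)] .
  have A0: "A + 0 \<cdot>\<^sub>m X = A" using At_0[OF A X] by simp
  show ?case
  proof (cases Ys)
    case Nil
    have e: "(\<lambda>t. P (Suc k) (?At t) [] $$ (i,j)) =
      (\<lambda>t. ?At t $$ (i div ?q, j div ?q) * P k (?At t) [] $$ (i mod ?q, j mod ?q))"
      using P_Suc_nil_index[OF Atc Suc.prems(2,3)] Nil by auto
    have IH: "((\<lambda>t. P k (?At t) [] $$ (i mod ?q, j mod ?q)) has_vector_derivative
      (\<Sum>p<Suc 0. P k A (ins p X []) $$ (i mod ?q, j mod ?q))) (at 0)"
      using Suc.IH[of "[]"] ab by auto
    have "P (Suc k) A [X] $$ (i,j) = X $$ (i div ?q, j div ?q) * P k A [] $$ (i mod ?q, j mod ?q)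
       + A $$ (i div ?q, j div ?q) * P k A [X] $$ (i mod ?q, j mod ?q)"
      using P_Suc_cons_index[OF A X, of "[]"] Suc.prems by auto
    then show ?thesis unfolding Nil e
      apply -
      apply (rule has_vector_derivative_eq_rhs)
       apply (rule has_vector_derivative_mult[OF dA IH])
      apply (simp add: A0 algebra_simps)
      done
  next
    case (Cons Y Zs)
    have Y: "Y \<in> carrier_mat n n" and Zs: "\<forall>Z\<in>set Zs. Z \<in> carrier_mat n n" using Suc.prems Cons by auto
    have e: "(\<lambda>t. P (Suc k) (?At t) Ys $$ (i,j)) =
      (\<lambda>t. Y $$ (i div ?q, j div ?q) * P k (?At t) Zs $$ (i mod ?q, j mod ?q)
         + ?At t $$ (i div ?q, j div ?q) * P k (?At t) (Y#Zs) $$ (i mod ?q, j mod ?q))"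
      using P_Suc_cons_index[OF Atc Y Zs Suc.prems(2,3)] Cons by auto
    have IH1: "((\<lambda>t. P k (?At t) Zs $$ (i mod ?q, j mod ?q)) has_vector_derivative
      (\<Sum>p<Suc (length Zs). P k A (ins p X Zs) $$ (i mod ?q, j mod ?q))) (at 0)"
      using Suc.IH[OF Zs ab(3,4)] .
    have IH2: "((\<lambda>t. P k (?At t) (Y#Zs) $$ (i mod ?q, j mod ?q)) has_vector_derivative
      (\<Sum>p<Suc (length (Y#Zs)). P k A (ins p X (Y#Zs)) $$ (i mod ?q, j mod ?q))) (at 0)"
      using Suc.IH[of "Y#Zs"] Y Zs ab(3,4) by auto
    let ?a = "(i div ?q, j div ?q)" and ?b = "(i mod ?q, j mod ?q)"
    have insc: "\<forall>Z\<in>set (ins p X Zs). Z \<in> carrier_mat n n" for p using X Zs by auto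
    have t0: "P (Suc k) A (ins 0 X (Y#Zs)) $$ (i,j) = X $$ ?a * P k A (Y#Zs) $$ ?b + A $$ ?a * P k A (X#Y#Zs) $$ ?b"
      using P_Suc_cons_index[OF A X, of "Y#Zs"] Y Zs Suc.prems by auto
    have tS: "P (Suc k) A (ins (Suc p) X (Y#Zs)) $$ (i,j) = Y $$ ?a * P k A (ins p X Zs) $$ ?b + A $$ ?a * P k A (Y # ins p X Zs) $$ ?b" for p
      using P_Suc_cons_index[OF A Y insc Suc.prems(2,3)] by simp
    have RHS: "(\<Sum>p<Suc (length Ys). P (Suc k) A (ins p X Ys) $$ (i,j)) =
       Y $$ ?a * (\<Sum>p<Suc (length Zs). P k A (ins p X Zs) $$ ?b)
       + A $$ ?a * (\<Sum>p<Suc (length (Y#Zs)). P k A (ins p X (Y#Zs)) $$ ?b)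
       + X $$ ?a * P k A (Y#Zs) $$ ?b"
    proof -
      have s1: "(\<Sum>p<Suc (Suc (length Zs)). P (Suc k) A (ins p X (Y#Zs)) $$ (i,j)) =
        P (Suc k) A (ins 0 X (Y#Zs)) $$ (i,j) + (\<Sum>p<Suc (length Zs). P (Suc k) A (ins (Suc p) X (Y#Zs)) $$ (i,j))"
        by (rule sum.lessThan_Suc_shift)
      have s2: "(\<Sum>p<Suc (Suc (length Zs)). P k A (ins p X (Y#Zs)) $$ ?b) =
        P k A (X#Y#Zs) $$ ?b + (\<Sum>p<Suc (length Zs). P k A (Y # ins p X Zs) $$ ?b)"
        by (subst sum.lessThan_Suc_shift) simp
      show ?thesis unfolding Cons length_Cons s1 s2 t0 tS
        by (simp add: sum.distrib sum_distrib_left algebra_simps)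
    qed
    show ?thesis unfolding e RHS
      apply (rule has_vector_derivative_eq_rhs)
       apply (rule has_vector_derivative_add[OF has_vector_derivative_mult_right[OF IH1] has_vector_derivative_mult[OF dA IH2]])
      apply (simp add: A0 algebra_simps)
      done
  qed
qed



fun perms :: "'a list \<Rightarrow> 'a list list" where
  "perms [] = [[]]"
| "perms (X#Xs) = concat (map (\<lambda>L. map (\<lambda>p. ins p X L) [0..<Suc (length L)]) (perms Xs))"

lemma perms_set: "L \<in> set (perms Xs) \<Longrightarrow> length L = length Xs \<and> set L = set Xs"
  by (induction Xs arbitrary: L) auto

lemma sum_list_deriv:
  "(\<forall>L\<in>set Ls. (f L has_vector_derivative f' L) F) \<Longrightarrow>
   ((\<lambda>t. sum_list (map (\<lambda>L. f L t) Ls)) has_vector_derivative sum_list (map f' Ls)) F"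
  by (induction Ls) (auto intro!: has_vector_derivative_add)

lemma sum_upt_list: "(\<Sum>p<n. f p) = sum_list (map f [0..<n])"
  by (induction n) simp_all

lemma sum_list_concat': "sum_list (concat xss) = sum_list (map sum_list xss)"
  by (induction xss) simp_all

lemma Dm_perms:
  assumes "A \<in> carrier_mat n n" and "\<forall>X\<in>set Xs. X \<in> carrier_mat n n"
  shows "Dm (tpow k) A Xs = mat (n^k) (n^k) (\<lambda>ij. sum_list (map (\<lambda>L. P k A L $$ ij) (perms Xs)))"
  using assms
proof (induction Xs arbitrary: A)
  case Nil
  have "tpow k A \<in> carrier_mat (n^k) (n^k)" using tpow_carrier Nil by auto
  then show ?case by (intro eq_matI) (auto simp: P_nil)
next
  case (Cons X Xs)
  have X: "X \<in> carrier_mat n n" and Xs: "\<forall>X\<in>set Xs. X \<in> carrier_mat n n" using Cons.prems by auto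
  let ?At = "\<lambda>t. A + complex_of_real t \<cdot>\<^sub>m X"
  have Atc: "?At t \<in> carrier_mat n n" for t using Cons.prems X by simp
  have e: "(\<lambda>t. Dm (tpow k) (?At t) Xs) = (\<lambda>t. mat (n^k) (n^k) (\<lambda>ij. sum_list (map (\<lambda>L. P k (?At t) L $$ ij) (perms Xs))))"
    using Cons.IH[OF Atc Xs] by simp
  show ?case
  proof (rule eq_matI)
    fix i j assume i: "i < dim_row (mat (n^k) (n^k) (\<lambda>ij. sum_list (map (\<lambda>L. P k A L $$ ij) (perms (X#Xs)))))"
      and j: "j < dim_col (mat (n^k) (n^k) (\<lambda>ij. sum_list (map (\<lambda>L. P k A L $$ ij) (perms (X#Xs)))))"
    then have i': "i < n^k" and j': "j < n^k" by auto
    have d: "((\<lambda>t. sum_list (map (\<lambda>L. P k (?At t) L $$ (i,j)) (perms Xs))) has_vector_derivative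
        sum_list (map (\<lambda>L. \<Sum>p<Suc (length L). P k A (ins p X L) $$ (i,j)) (perms Xs))) (at 0)"
      apply (rule sum_list_deriv)
      apply (intro ballI P_deriv[OF Cons.prems(1) X _ i' j'])
      using perms_set Xs by blast
    have s: "sum_list (map (\<lambda>L. \<Sum>p<Suc (length L). P k A (ins p X L) $$ (i,j)) (perms Xs))
      = sum_list (map (\<lambda>L. P k A L $$ (i,j)) (perms (X#Xs)))"
      by (simp add: sum_upt_list sum_list_concat' map_concat comp_def)
    have "Dm (tpow k) A (X#Xs) $$ (i,j) = vector_derivative (\<lambda>t. sum_list (map (\<lambda>L. P k (?At t) L $$ (i,j)) (perms Xs))) (at 0)"
      using i' j' by (simp add: mderiv0_def e)
    also have "\<dots> = sum_list (map (\<lambda>L. P k A L $$ (i,j)) (perms (X#Xs)))"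
      using vector_derivative_at[OF d] s by simp
    finally show "Dm (tpow k) A (X#Xs) $$ (i,j) = mat (n^k) (n^k) (\<lambda>ij. sum_list (map (\<lambda>L. P k A L $$ ij) (perms (X#Xs)))) $$ (i,j)"
      using i' j' by simp
  qed (simp_all add: mderiv0_def e)
qed



definition sg :: "nat \<Rightarrow> (nat \<Rightarrow> nat) \<Rightarrow> nat \<Rightarrow> nat" where
  "sg p q i = (if i < p then Suc (q i) else if i = p then 0 else Suc (q (i - 1)))"

lemma sg_permutes:
  assumes q: "q permutes {..<m}" and p: "p \<le> m"
  shows "sg p q permutes {..<Suc m}"
proof (rule bij_imp_permutes)
  have qin: "i < m \<Longrightarrow> q i < m" for i using permutes_in_image[OF q] by simp
  have qout: "i \<ge> m \<Longrightarrow> q i = i" for i using permutes_not_in[OF q] by simp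
  have qinj: "q i = q j \<Longrightarrow> i = j" for i j using permutes_inj[OF q] by (simp add: inj_eq)
  have sub: "sg p q ` {..<Suc m} \<subseteq> {..<Suc m}"
  proof
    fix y assume "y \<in> sg p q ` {..<Suc m}"
    then obtain i where i: "i < Suc m" "y = sg p q i" by auto
    show "y \<in> {..<Suc m}"
    proof (cases "i < p")
      case True then show ?thesis using i qin p by (simp add: sg_def)
    next
      case False
      then show ?thesis using i qin p by (cases "i = p") (auto simp: sg_def)
    qed
  qed
  have inj: "inj_on (sg p q) {..<Suc m}"
  proof (rule inj_onI)
    fix i j assume i: "i \<in> {..<Suc m}" and j: "j \<in> {..<Suc m}" and e: "sg p q i = sg p q j"
    show "i = j"
      using e qinj[of i j] qinj[of "i - 1" j] qinj[of i "j - 1"] qinj[of "i - 1" "j - 1"]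
      unfolding sg_def by (auto split: if_splits)
  qed
  show "bij_betw (sg p q) {..<Suc m} {..<Suc m}"
    unfolding bij_betw_def using inj endo_inj_surj[OF _ sub inj] by simp
  fix x assume "x \<notin> {..<Suc m}"
  then show "sg p q x = x" using qout[of "x - 1"] p unfolding sg_def by auto
qed

lemma sg_inj:
  assumes q1: "q1 permutes {..<m}" and q2: "q2 permutes {..<m}" and p1: "p1 \<le> m" and p2: "p2 \<le> m"
    and e: "sg p1 q1 = sg p2 q2"
  shows "p1 = p2 \<and> q1 = q2"
proof -
  have z: "sg p q i = 0 \<longleftrightarrow> i = p" for p q i unfolding sg_def by auto
  have "sg p2 q2 p1 = 0" using e z by metis
  then have pp: "p1 = p2" using z by simp
  have "q1 i = q2 i" for i
  proof (cases "i < m")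
    case True
    show ?thesis
    proof (cases "i < p1")
      case True
      then show ?thesis using fun_cong[OF e, of i] pp unfolding sg_def by simp
    next
      case False
      then show ?thesis using fun_cong[OF e, of "Suc i"] pp unfolding sg_def by simp
    qed
  next
    case False
    then show ?thesis using permutes_not_in[OF q1] permutes_not_in[OF q2] by simp
  qed
  then show ?thesis using pp by auto
qed

lemma sg_inj_on: "inj_on (\<lambda>(p,q). sg p q) ({..<Suc m} \<times> {\<sigma>. \<sigma> permutes {..<m}})"
proof (rule inj_onI)
  fix x y assume x: "x \<in> {..<Suc m} \<times> {\<sigma>. \<sigma> permutes {..<m}}" and y: "y \<in> {..<Suc m} \<times> {\<sigma>. \<sigma> permutes {..<m}}"
    and e: "(\<lambda>(p,q). sg p q) x = (\<lambda>(p,q). sg p q) y"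
  obtain p1 q1 p2 q2 where "x = (p1,q1)" "y = (p2,q2)" by fastforce
  with x y e sg_inj[of q1 m q2 p1 p2] show "x = y" by auto
qed

lemma nth_ins: "p \<le> length L \<Longrightarrow> i < Suc (length L) \<Longrightarrow>
  ins p X L ! i = (if i < p then L ! i else if i = p then X else L ! (i - 1))"
  unfolding ins_def by (auto simp: nth_append min_def)

lemma sg_map:
  assumes p: "p \<le> m" and len: "length Xs = m"
  shows "map (\<lambda>i. (X#Xs) ! sg p q i) [0..<Suc m] = ins p X (map (\<lambda>i. Xs ! q i) [0..<m])"
proof (rule nth_equalityI)
  show "length (map (\<lambda>i. (X#Xs) ! sg p q i) [0..<Suc m]) = length (ins p X (map (\<lambda>i. Xs ! q i) [0..<m]))"
    by simp
  fix i assume i: "i < length (map (\<lambda>i. (X#Xs) ! sg p q i) [0..<Suc m])"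
  then have i': "i < Suc m" by simp
  show "map (\<lambda>i. (X#Xs) ! sg p q i) [0..<Suc m] ! i = ins p X (map (\<lambda>i. Xs ! q i) [0..<m]) ! i"
    using i' p by (subst nth_ins) (auto simp: sg_def nth_append less_Suc_eq)
qed

lemma perms_sum:
  fixes g :: "'a list \<Rightarrow> 'b::comm_monoid_add"
  shows "sum_list (map g (perms Xs)) = (\<Sum>\<sigma>\<in>{\<sigma>. \<sigma> permutes {..<length Xs}}. g (map (\<lambda>i. Xs ! \<sigma> i) [0..<length Xs]))"
proof (induction Xs arbitrary: g)
  case Nil
  have "{\<sigma>. \<sigma> permutes ({}::nat set)} = {id}" by (auto simp: permutes_empty)
  then show ?case by simp
next
  case (Cons X Xs)
  let ?m = "length Xs"
  let ?Q = "{\<sigma>. \<sigma> permutes {..<?m}}"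
  let ?g' = "\<lambda>L. \<Sum>p<Suc (length L). g (ins p X L)"
  have "sum_list (map g (perms (X#Xs))) = sum_list (map ?g' (perms Xs))"
    by (simp add: sum_upt_list sum_list_concat' map_concat comp_def)
  also have "\<dots> = (\<Sum>q\<in>?Q. ?g' (map (\<lambda>i. Xs ! q i) [0..<?m]))"
    by (rule Cons.IH)
  also have "\<dots> = (\<Sum>q\<in>?Q. \<Sum>p<Suc ?m. g (ins p X (map (\<lambda>i. Xs ! q i) [0..<?m])))"
    by simp
  also have "\<dots> = (\<Sum>(p,q)\<in>{..<Suc ?m} \<times> ?Q. g (map (\<lambda>i. (X#Xs) ! sg p q i) [0..<Suc ?m]))"
    apply (subst sum.swap)
    apply (subst sum.cartesian_product)
    apply (rule sum.cong[OF refl])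
    apply (auto simp: sg_map simp del: upt_Suc)
    done
  also have "\<dots> = (\<Sum>\<sigma>\<in>(\<lambda>(p,q). sg p q) ` ({..<Suc ?m} \<times> ?Q). g (map (\<lambda>i. (X#Xs) ! \<sigma> i) [0..<Suc ?m]))"
  proof -
    have "inj_on (\<lambda>(p,q). sg p q) ({..<Suc ?m} \<times> ?Q)"
      by (rule sg_inj_on)
    then show ?thesis by (simp add: sum.reindex case_prod_unfold)
  qed
  also have "(\<lambda>(p,q). sg p q) ` ({..<Suc ?m} \<times> ?Q) = {\<sigma>. \<sigma> permutes {..<length (X#Xs)}}"
  proof (rule card_subset_eq)
    show "finite {\<sigma>. \<sigma> permutes {..<length (X#Xs)}}" by (rule finite_permutations) simp
    show "(\<lambda>(p,q). sg p q) ` ({..<Suc ?m} \<times> ?Q) \<subseteq> {\<sigma>. \<sigma> permutes {..<length (X#Xs)}}"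
      by (auto intro: sg_permutes)
    have "inj_on (\<lambda>(p,q). sg p q) ({..<Suc ?m} \<times> ?Q)"
      by (rule sg_inj_on)
    then have "card ((\<lambda>(p,q). sg p q) ` ({..<Suc ?m} \<times> ?Q)) = Suc ?m * fact ?m"
      by (simp add: card_image card_cartesian_product card_permutations)
    also have "\<dots> = card {\<sigma>. \<sigma> permutes {..<length (X#Xs)}}"
      by (simp add: card_permutations)
    finally show "card ((\<lambda>(p,q). sg p q) ` ({..<Suc ?m} \<times> ?Q)) = card {\<sigma>. \<sigma> permutes {..<length (X#Xs)}}" .
  qed
  finally show ?case by simp
qed



lemma interl_carrier:
  assumes A: "A \<in> carrier_mat n n"
  shows "\<forall>Y\<in>set Ys. Y \<in> carrier_mat n n \<Longrightarrow> length js = Suc (length Ys) \<Longrightarrow>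
    interl A js Ys \<in> carrier_mat (n^(sum_list js + length Ys)) (n^(sum_list js + length Ys))"
proof (induction Ys arbitrary: js)
  case Nil
  then obtain j where "js = [j]" by (cases js) auto
  then show ?case using tpow_carrier[OF A] by simp
next
  case (Cons Y Ys)
  then obtain j rest where js: "js = j # rest" by (cases js) auto
  have c: "interl A rest Ys \<in> carrier_mat (n^(sum_list rest + length Ys)) (n^(sum_list rest + length Ys))"
    using Cons js by auto
  have "kron Y (interl A rest Ys) \<in> carrier_mat (n * n^(sum_list rest + length Ys)) (n * n^(sum_list rest + length Ys))"
    using kron_carrier[OF _ c, of Y n n] Cons.prems by auto
  then have "kron (tpow j A) (kron Y (interl A rest Ys)) \<in> carrier_mat (n^j * (n * n^(sum_list rest + length Ys))) (n^j * (n * n^(sum_list rest + length Ys)))"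
    using kron_carrier tpow_carrier[OF A] by blast
  moreover have "n^j * (n * n^(sum_list rest + length Ys)) = n^(sum_list js + length (Y#Ys))"
    using js by (simp add: power_add)
  ultimately show ?case using js by simp
qed

definition J :: "nat \<Rightarrow> nat \<Rightarrow> nat list set" where
  "J k l = {js. length js = Suc l \<and> sum_list js + l = k}"

lemma J_finite: "finite (J k l)"
proof (rule finite_subset)
  show "J k l \<subseteq> {js. set js \<subseteq> {0..k} \<and> length js = Suc l}"
  proof
    fix js assume "js \<in> J k l"
    then have "\<forall>x\<in>set js. x \<le> k" "length js = Suc l" unfolding J_def using member_le_sum_list by fastforce+
    then show "js \<in> {js. set js \<subseteq> {0..k} \<and> length js = Suc l}" by auto
  qed
  show "finite {js. set js \<subseteq> {0..k} \<and> length js = Suc l}"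
    by (rule finite_lists_length_eq) simp
qed

lemma J_nil: "J k 0 = {[k]}"
proof -
  have "length js = Suc 0 \<longleftrightarrow> (\<exists>x. js = [x])" for js :: "nat list" by (cases js) auto
  then show ?thesis unfolding J_def by auto
qed

lemma J_0_Suc: "J 0 (Suc l) = {}"
  unfolding J_def by auto

lemma J_split0: "{js \<in> J (Suc k) (Suc l). hd js = 0} = Cons 0 ` J k l"
proof
  show "{js \<in> J (Suc k) (Suc l). hd js = 0} \<subseteq> Cons 0 ` J k l"
  proof
    fix js assume h: "js \<in> {js \<in> J (Suc k) (Suc l). hd js = 0}"
    then obtain r where "js = 0 # r" unfolding J_def by (cases js) auto
    then show "js \<in> Cons 0 ` J k l" using h unfolding J_def by auto
  qed
  show "Cons 0 ` J k l \<subseteq> {js \<in> J (Suc k) (Suc l). hd js = 0}"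
    unfolding J_def by auto
qed

lemma J_split1: "J (Suc k) (Suc l) - {js. hd js = 0} = (\<lambda>js. Suc (hd js) # tl js) ` J k (Suc l)"
proof
  show "J (Suc k) (Suc l) - {js. hd js = 0} \<subseteq> (\<lambda>js. Suc (hd js) # tl js) ` J k (Suc l)"
  proof
    fix js assume h: "js \<in> J (Suc k) (Suc l) - {js. hd js = 0}"
    then obtain j r where js: "js = Suc j # r" unfolding J_def
      by (cases js) (auto simp: gr0_conv_Suc)
    then have "j # r \<in> J k (Suc l)" using h unfolding J_def by auto
    then show "js \<in> (\<lambda>js. Suc (hd js) # tl js) ` J k (Suc l)" using js by force
  qed
  show "(\<lambda>js. Suc (hd js) # tl js) ` J k (Suc l) \<subseteq> J (Suc k) (Suc l) - {js. hd js = 0}"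
  proof
    fix x assume "x \<in> (\<lambda>js. Suc (hd js) # tl js) ` J k (Suc l)"
    then obtain js where js: "js \<in> J k (Suc l)" "x = Suc (hd js) # tl js" by auto
    then obtain j r where "js = j # r" unfolding J_def by (cases js) auto
    then show "x \<in> J (Suc k) (Suc l) - {js. hd js = 0}" using js unfolding J_def by auto
  qed
qed

lemma J_inj1: "inj_on (\<lambda>js. Suc (hd js) # tl js) (J k (Suc l))"
proof (rule inj_onI)
  fix x y assume "x \<in> J k (Suc l)" "y \<in> J k (Suc l)" "Suc (hd x) # tl x = Suc (hd y) # tl y"
  moreover have "x \<noteq> []" "y \<noteq> []" using calculation unfolding J_def by auto
  ultimately show "x = y" by (intro list.expand) auto
qed



lemma kron_index_c:
  assumes "A \<in> carrier_mat n n" "M \<in> carrier_mat q q" "i < n^Suc k" "j < n^Suc k" "q = n^k"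
  shows "kron A M $$ (i,j) = A $$ (i div q, j div q) * M $$ (i mod q, j mod q)"
  using assms by simp

lemma interl_0_index:
  assumes A: "A \<in> carrier_mat n n" and Y: "Y \<in> carrier_mat n n" and Ys: "\<forall>Z\<in>set Ys. Z \<in> carrier_mat n n"
    and len: "length js = Suc (length Ys)" and s: "sum_list js + length Ys = k"
    and i: "i < n^Suc k" and j: "j < n^Suc k"
  shows "interl A (0#js) (Y#Ys) $$ (i,j) = Y $$ (i div n^k, j div n^k) * interl A js Ys $$ (i mod n^k, j mod n^k)"
proof -
  have c: "interl A js Ys \<in> carrier_mat (n^k) (n^k)" using interl_carrier[OF A Ys len] unfolding s .
  have "interl A (0#js) (Y#Ys) = kron Y (interl A js Ys)" by simp
  then show ?thesis using kron_index_c[OF Y c i j refl] by simp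
qed

lemma interl_Suc_index:
  assumes A: "A \<in> carrier_mat n n" and Y: "Y \<in> carrier_mat n n" and Ys: "\<forall>Z\<in>set Ys. Z \<in> carrier_mat n n"
    and len: "length (h#t) = Suc (length (Y#Ys))" and s: "sum_list (h#t) + length (Y#Ys) = k"
    and i: "i < n^Suc k" and j: "j < n^Suc k"
  shows "interl A (Suc h # t) (Y#Ys) $$ (i,j) = A $$ (i div n^k, j div n^k) * interl A (h#t) (Y#Ys) $$ (i mod n^k, j mod n^k)"
proof -
  have YYs: "\<forall>Z\<in>set (Y#Ys). Z \<in> carrier_mat n n" using Y Ys by auto
  have c: "interl A (h#t) (Y#Ys) \<in> carrier_mat (n^k) (n^k)" using interl_carrier[OF A YYs len] unfolding s .
  have e: "interl A (Suc h # t) (Y#Ys) = kron A (interl A (h#t) (Y#Ys))"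
    by (simp add: kron_assoc)
  show ?thesis unfolding e using kron_index_c[OF A c i j refl] .
qed

lemma P_interl:
  assumes A: "A \<in> carrier_mat n n"
  shows "\<forall>Y\<in>set L. Y \<in> carrier_mat n n \<Longrightarrow> i < n^k \<Longrightarrow> j < n^k \<Longrightarrow>
    P k A L $$ (i,j) = (\<Sum>js\<in>J k (length L). interl A js L $$ (i,j))"
proof (induction k arbitrary: L i j)
  case 0
  then show ?case by (cases L) (auto simp: J_nil J_0_Suc)
next
  case (Suc k)
  show ?case
  proof (cases L)
    case Nil
    have e1: "P (Suc k) A [] = tpow (Suc k) A" by (rule P_nil)
    have e2: "(\<Sum>js\<in>{[Suc k]}. interl A js [] $$ (i,j)) = interl A [Suc k] [] $$ (i,j)"
      by (simp only: sum.insert[OF finite.emptyI] empty_iff not_False_eq_True sum.empty add_0_right)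
    show ?thesis unfolding Nil list.size(3) J_nil e1 e2 interl.simps(1) ..
  next
    case (Cons Y Ys)
    have Y: "Y \<in> carrier_mat n n" and Ys: "\<forall>Z\<in>set Ys. Z \<in> carrier_mat n n" using Suc.prems Cons by auto
    let ?l = "length Ys"
    let ?a = "(i div n^k, j div n^k)" and ?b = "(i mod n^k, j mod n^k)"
    have ab: "i mod n^k < n^k" "j mod n^k < n^k" using Suc.prems idx_bounds by auto
    have lhs: "P (Suc k) A L $$ (i,j) = Y $$ ?a * (\<Sum>js\<in>J k ?l. interl A js Ys $$ ?b)
      + A $$ ?a * (\<Sum>js\<in>J k (Suc ?l). interl A js (Y#Ys) $$ ?b)"
      unfolding Cons P_Suc_cons_index[OF A Y Ys Suc.prems(2,3)]
      using Suc.IH[OF Ys ab] Suc.IH[of "Y#Ys", OF _ ab] Y Ys by simp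
    let ?S = "J (Suc k) (Suc ?l)"
    have "(\<Sum>js\<in>?S. interl A js (Y#Ys) $$ (i,j)) =
       (\<Sum>js\<in>?S \<inter> {js. hd js = 0}. interl A js (Y#Ys) $$ (i,j)) + (\<Sum>js\<in>?S - {js. hd js = 0}. interl A js (Y#Ys) $$ (i,j))"
      by (rule sum.Int_Diff[OF J_finite])
    also have "?S \<inter> {js. hd js = 0} = Cons 0 ` J k ?l" proof -
      have "?S \<inter> {js. hd js = 0} = {js \<in> ?S. hd js = 0}" by auto
      then show ?thesis using J_split0 by simp
    qed
    also have "?S - {js. hd js = 0} = (\<lambda>js. Suc (hd js) # tl js) ` J k (Suc ?l)" by (rule J_split1)
    also have "(\<Sum>js\<in>Cons 0 ` J k ?l. interl A js (Y#Ys) $$ (i,j)) = (\<Sum>js\<in>J k ?l. interl A (0#js) (Y#Ys) $$ (i,j))"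
      by (simp add: sum.reindex)
    also have "\<dots> = (\<Sum>js\<in>J k ?l. Y $$ ?a * interl A js Ys $$ ?b)"
    proof (rule sum.cong[OF refl])
      fix js assume "js \<in> J k ?l"
      then have "length js = Suc ?l" "sum_list js + ?l = k" unfolding J_def by auto
      then show "interl A (0#js) (Y#Ys) $$ (i,j) = Y $$ ?a * interl A js Ys $$ ?b"
        by (rule interl_0_index[OF A Y Ys _ _ Suc.prems(2,3)])
    qed
    also have "(\<Sum>js\<in>(\<lambda>js. Suc (hd js) # tl js) ` J k (Suc ?l). interl A js (Y#Ys) $$ (i,j))
       = (\<Sum>js\<in>J k (Suc ?l). interl A (Suc (hd js) # tl js) (Y#Ys) $$ (i,j))"
      by (simp add: sum.reindex[OF J_inj1])
    also have "\<dots> = (\<Sum>js\<in>J k (Suc ?l). A $$ ?a * interl A js (Y#Ys) $$ ?b)"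
    proof (rule sum.cong[OF refl])
      fix js assume js: "js \<in> J k (Suc ?l)"
      then obtain h t where ht: "js = h # t" unfolding J_def by (cases js) auto
      have l: "length (h#t) = Suc (length (Y#Ys))" "sum_list (h#t) + length (Y#Ys) = k"
        using js ht unfolding J_def by auto
      show "interl A (Suc (hd js) # tl js) (Y#Ys) $$ (i,j) = A $$ ?a * interl A js (Y#Ys) $$ ?b"
        unfolding ht list.sel(1) list.sel(3) by (rule interl_Suc_index[OF A Y Ys l Suc.prems(2,3)])
    qed
    finally have R: "(\<Sum>js\<in>?S. interl A js (Y#Ys) $$ (i,j)) = (\<Sum>js\<in>J k ?l. Y $$ ?a * interl A js Ys $$ ?b)
       + (\<Sum>js\<in>J k (Suc ?l). A $$ ?a * interl A js (Y#Ys) $$ ?b)" .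
    have lhs': "P (Suc k) A L $$ (i,j) = (\<Sum>js\<in>J k ?l. Y $$ ?a * interl A js Ys $$ ?b)
       + (\<Sum>js\<in>J k (Suc ?l). A $$ ?a * interl A js (Y#Ys) $$ ?b)"
      unfolding lhs sum_distrib_left ..
    show ?thesis unfolding lhs' unfolding Cons length_Cons R ..
  qed
qed



lemma J_eq: "m \<le> k \<Longrightarrow> J k m = {js. length js = m + 1 \<and> sum_list js = k - m}"
  unfolding J_def by auto

lemma part1:
  assumes A: "A \<in> carrier_mat n n" and len: "length Xs = m" and Xs: "\<forall>X\<in>set Xs. X \<in> carrier_mat n n"
    and mk: "m \<le> k"
  shows "Dm (tpow k) A Xs =
           mat (n ^ k) (n ^ k) (\<lambda>ij.
             \<Sum>\<sigma>\<in>{\<sigma>. \<sigma> permutes {..<m}}.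
               \<Sum>js\<in>{js. length js = m + 1 \<and> sum_list js = k - m}.
                 interl A js (map (\<lambda>i. Xs ! \<sigma> i) [0..<m]) $$ ij)"
proof (rule eq_matI)
  fix i j assume i: "i < dim_row (mat (n ^ k) (n ^ k) (\<lambda>ij.
             \<Sum>\<sigma>\<in>{\<sigma>. \<sigma> permutes {..<m}}.
               \<Sum>js\<in>{js. length js = m + 1 \<and> sum_list js = k - m}.
                 interl A js (map (\<lambda>i. Xs ! \<sigma> i) [0..<m]) $$ ij))"
    and j: "j < dim_col (mat (n ^ k) (n ^ k) (\<lambda>ij.
             \<Sum>\<sigma>\<in>{\<sigma>. \<sigma> permutes {..<m}}.
               \<Sum>js\<in>{js. length js = m + 1 \<and> sum_list js = k - m}.
                 interl A js (map (\<lambda>i. Xs ! \<sigma> i) [0..<m]) $$ ij))"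
  then have i': "i < n^k" and j': "j < n^k" by auto
  have "Dm (tpow k) A Xs $$ (i,j) = sum_list (map (\<lambda>L. P k A L $$ (i,j)) (perms Xs))"
    using Dm_perms[OF A Xs] i' j' by simp
  also have "\<dots> = (\<Sum>\<sigma>\<in>{\<sigma>. \<sigma> permutes {..<m}}. P k A (map (\<lambda>i. Xs ! \<sigma> i) [0..<m]) $$ (i,j))"
    using perms_sum[of "\<lambda>L. P k A L $$ (i,j)" Xs] len by simp
  also have "\<dots> = (\<Sum>\<sigma>\<in>{\<sigma>. \<sigma> permutes {..<m}}. \<Sum>js\<in>{js. length js = m + 1 \<and> sum_list js = k - m}.
                 interl A js (map (\<lambda>i. Xs ! \<sigma> i) [0..<m]) $$ (i,j))"
  proof (rule sum.cong[OF refl])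
    fix \<sigma> assume s: "\<sigma> \<in> {\<sigma>. \<sigma> permutes {..<m}}"
    have c: "\<forall>Y\<in>set (map (\<lambda>i. Xs ! \<sigma> i) [0..<m]). Y \<in> carrier_mat n n"
    proof
      fix Y assume "Y \<in> set (map (\<lambda>i. Xs ! \<sigma> i) [0..<m])"
      then obtain i where "i < m" "Y = Xs ! \<sigma> i" by auto
      moreover have "\<sigma> i < m" using permutes_in_image[of \<sigma> "{..<m}" i] s \<open>i < m\<close> by simp
      ultimately show "Y \<in> carrier_mat n n" using Xs len by auto
    qed
    show "P k A (map (\<lambda>i. Xs ! \<sigma> i) [0..<m]) $$ (i,j) = (\<Sum>js\<in>{js. length js = m + 1 \<and> sum_list js = k - m}.
                 interl A js (map (\<lambda>i. Xs ! \<sigma> i) [0..<m]) $$ (i,j))"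
      using P_interl[OF A c i' j'] J_eq[OF mk] by simp
  qed
  finally show "Dm (tpow k) A Xs $$ (i,j) = mat (n ^ k) (n ^ k) (\<lambda>ij.
             \<Sum>\<sigma>\<in>{\<sigma>. \<sigma> permutes {..<m}}.
               \<Sum>js\<in>{js. length js = m + 1 \<and> sum_list js = k - m}.
                 interl A js (map (\<lambda>i. Xs ! \<sigma> i) [0..<m]) $$ ij) $$ (i,j)"
    using i' j' by simp
qed (use Dm_perms[OF A Xs] in simp_all)



lemma vnorm_L2: "vnorm x = L2_set (\<lambda>i. cmod (x$i)) {..<dim_vec x}"
  unfolding vnorm_def L2_set_def by simp

lemma vnorm_nonneg: "0 \<le> vnorm x"
  unfolding vnorm_L2 by simp

lemma vnorm_smult: "vnorm (c \<cdot>\<^sub>v x) = cmod c * vnorm x"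
  unfolding vnorm_L2 by (subst L2_set_right_distrib) (auto intro!: L2_set_cong simp: norm_mult)

lemma entry_le_vnorm: "i < dim_vec x \<Longrightarrow> cmod (x$i) \<le> vnorm x"
  unfolding vnorm_L2 by (rule member_le_L2_set) auto

lemma vnorm_0: "vnorm x = 0 \<Longrightarrow> i < dim_vec x \<Longrightarrow> x$i = 0"
  unfolding vnorm_L2 by (subst (asm) L2_set_eq_0_iff) auto

lemma mv_index: "i < dim_row M \<Longrightarrow> dim_vec x = dim_col M \<Longrightarrow> (M *\<^sub>v x) $ i = (\<Sum>j<dim_col M. M $$ (i,j) * x $ j)"
  by (simp add: scalar_prod_def atLeast0LessThan)

lemma dim_mv[simp]: "dim_vec (M *\<^sub>v x) = dim_row M"
  by simp

lemma mv_crude: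
  assumes "dim_vec x = dim_col M"
  shows "vnorm (M *\<^sub>v x) \<le> (\<Sum>i<dim_row M. \<Sum>j<dim_col M. cmod (M $$ (i,j))) * vnorm x"
proof -
  have "vnorm (M *\<^sub>v x) \<le> (\<Sum>i<dim_row M. cmod ((M *\<^sub>v x) $ i))"
    unfolding vnorm_L2 dim_mv by (rule L2_set_le_sum) simp
  also have "\<dots> \<le> (\<Sum>i<dim_row M. (\<Sum>j<dim_col M. cmod (M $$ (i,j))) * vnorm x)"
  proof (rule sum_mono)
    fix i assume i: "i \<in> {..<dim_row M}"
    have "cmod ((M *\<^sub>v x) $ i) = cmod (\<Sum>j<dim_col M. M $$ (i,j) * x $ j)" using i assms by (subst mv_index) auto
    also have "\<dots> \<le> (\<Sum>j<dim_col M. cmod (M $$ (i,j) * x $ j))" by (rule norm_sum)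
    also have "\<dots> \<le> (\<Sum>j<dim_col M. cmod (M $$ (i,j)) * vnorm x)"
      by (rule sum_mono) (use assms entry_le_vnorm in \<open>auto simp: norm_mult intro!: mult_left_mono\<close>)
    finally show "cmod ((M *\<^sub>v x) $ i) \<le> (\<Sum>j<dim_col M. cmod (M $$ (i,j))) * vnorm x"
      by (simp add: sum_distrib_right)
  qed
  finally show ?thesis by (simp add: sum_distrib_right)
qed

definition opS :: "complex mat \<Rightarrow> real set" where
  "opS M = {vnorm (M *\<^sub>v x) | x. x \<in> carrier_vec (dim_col M) \<and> vnorm x = 1}"

lemma opnorm_opS: "opnorm M = Sup (opS M)"
  unfolding opnorm_def opS_def ..

lemma opS_bdd: "bdd_above (opS M)"
proof
  fix y assume "y \<in> opS M"
  then obtain x where "x \<in> carrier_vec (dim_col M)" "vnorm x = 1" "y = vnorm (M *\<^sub>v x)"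
    unfolding opS_def by auto
  then show "y \<le> (\<Sum>i<dim_row M. \<Sum>j<dim_col M. cmod (M $$ (i,j)))"
    using mv_crude[of x M] by auto
qed

lemma vnorm_unit: "i < n \<Longrightarrow> vnorm (unit_vec n i) = 1"
proof -
  assume i: "i < n"
  have "(\<Sum>j<n. (cmod (unit_vec n i $ j))\<^sup>2) = (\<Sum>j<n. if j = i then 1 else 0)"
    by (rule sum.cong) (use i in auto)
  also have "\<dots> = 1" using i by simp
  finally show ?thesis unfolding vnorm_def by simp
qed

lemma opS_nonempty: "dim_col M > 0 \<Longrightarrow> opS M \<noteq> {}"
  unfolding opS_def using vnorm_unit[of 0 "dim_col M"] by (auto intro!: exI[of _ "unit_vec (dim_col M) 0"])

lemma opnorm_ge: "x \<in> carrier_vec (dim_col M) \<Longrightarrow> vnorm x = 1 \<Longrightarrow> vnorm (M *\<^sub>v x) \<le> opnorm M"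
  unfolding opnorm_opS by (rule cSup_upper[OF _ opS_bdd]) (auto simp: opS_def)

lemma opnorm_least: "dim_col M > 0 \<Longrightarrow> (\<And>x. x \<in> carrier_vec (dim_col M) \<Longrightarrow> vnorm x = 1 \<Longrightarrow> vnorm (M *\<^sub>v x) \<le> B)
  \<Longrightarrow> opnorm M \<le> B"
  unfolding opnorm_opS by (rule cSup_least[OF opS_nonempty]) (auto simp: opS_def)

lemma opnorm_nonneg: "dim_col M > 0 \<Longrightarrow> 0 \<le> opnorm M"
proof -
  assume d: "dim_col M > 0"
  have "vnorm (M *\<^sub>v unit_vec (dim_col M) 0) \<le> opnorm M"
    by (rule opnorm_ge) (simp_all add: vnorm_unit d)
  then show ?thesis using vnorm_nonneg order_trans by blast
qed

lemma opnorm_bound: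
  assumes x: "x \<in> carrier_vec (dim_col M)"
  shows "vnorm (M *\<^sub>v x) \<le> opnorm M * vnorm x"
proof (cases "vnorm x = 0")
  case True
  have "(M *\<^sub>v x) $ i = 0" if "i < dim_row M" for i
    using that x vnorm_0[OF True] by (subst mv_index) auto
  then have "vnorm (M *\<^sub>v x) = 0" unfolding vnorm_L2 by (intro L2_set_0') auto
  then show ?thesis using True by simp
next
  case False
  let ?v = "vnorm x"
  have v: "?v > 0" using False vnorm_nonneg[of x] by simp
  let ?y = "complex_of_real (1 / ?v) \<cdot>\<^sub>v x"
  have y: "?y \<in> carrier_vec (dim_col M)" using x by simp
  have Mc: "M \<in> carrier_mat (dim_row M) (dim_col M)" unfolding carrier_mat_def by simp
  have vy: "vnorm ?y = 1" using v by (simp add: vnorm_smult norm_divide)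
  have "M *\<^sub>v ?y = complex_of_real (1 / ?v) \<cdot>\<^sub>v (M *\<^sub>v x)"
    using mult_mat_vec[OF Mc x] .
  then have "vnorm (M *\<^sub>v ?y) = vnorm (M *\<^sub>v x) / ?v" using v by (simp add: vnorm_smult norm_divide)
  then have "vnorm (M *\<^sub>v x) / ?v \<le> opnorm M" using opnorm_ge[OF y vy] by simp
  then show ?thesis using v by (simp add: divide_le_eq mult.commute)
qed



lemma sum_lessThan_add: fixes m n :: nat shows "(\<Sum>i<m+n. f i) = (\<Sum>i<m. f i) + (\<Sum>b<n. f (m+b))"
  by (induction n) (simp_all add: add.assoc)

lemma sum_pair: fixes p q :: nat shows "(\<Sum>i<p*q. f i) = (\<Sum>a<p. \<Sum>b<q. f (a*q+b))"
proof (induction p)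
  case 0 then show ?case by simp
next
  case (Suc p)
  have "(\<Sum>i<Suc p*q. f i) = (\<Sum>i<p*q + q. f i)" by (simp add: add.commute)
  also have "\<dots> = (\<Sum>i<p*q. f i) + (\<Sum>b<q. f (p*q+b))" by (rule sum_lessThan_add)
  finally show ?case using Suc by simp
qed

lemma sum_pair_divmod: fixes p q :: nat shows "(\<Sum>i<p*q. f (i div q) (i mod q)) = (\<Sum>a<p. \<Sum>b<q. f a b)"
proof -
  have "(\<Sum>i<p*q. f (i div q) (i mod q)) = (\<Sum>a<p. \<Sum>b<q. f ((a*q+b) div q) ((a*q+b) mod q))"
    by (rule sum_pair)
  also have "\<dots> = (\<Sum>a<p. \<Sum>b<q. f a b)"
    by (rule sum.cong[OF refl], rule sum.cong[OF refl]) auto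
  finally show ?thesis .
qed

lemma vnorm_sq: "(vnorm x)\<^sup>2 = (\<Sum>i<dim_vec x. (cmod (x$i))\<^sup>2)"
  unfolding vnorm_def by (simp add: sum_nonneg)

lemma smult_mv: "dim_vec x = dim_col M \<Longrightarrow> (c \<cdot>\<^sub>m M) *\<^sub>v x = c \<cdot>\<^sub>v (M *\<^sub>v x)"
  by (rule eq_vecI) (auto simp: scalar_prod_def sum_distrib_left mult.assoc intro!: sum.cong)

lemma opnorm_smult_le: "dim_col M > 0 \<Longrightarrow> opnorm (c \<cdot>\<^sub>m M) \<le> cmod c * opnorm M"
proof (rule opnorm_least)
  assume d: "dim_col M > 0"
  then show "dim_col (c \<cdot>\<^sub>m M) > 0" by simp
  fix x assume x: "x \<in> carrier_vec (dim_col (c \<cdot>\<^sub>m M))" and x1: "vnorm x = 1"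
  have "(c \<cdot>\<^sub>m M) *\<^sub>v x = c \<cdot>\<^sub>v (M *\<^sub>v x)" by (rule smult_mv) (use x in auto)
  then have "vnorm ((c \<cdot>\<^sub>m M) *\<^sub>v x) = cmod c * vnorm (M *\<^sub>v x)" by (simp add: vnorm_smult)
  also have "\<dots> \<le> cmod c * opnorm M"
    by (rule mult_left_mono[OF opnorm_ge]) (use x x1 in auto)
  finally show "vnorm ((c \<cdot>\<^sub>m M) *\<^sub>v x) \<le> cmod c * opnorm M" .
qed

lemma opnorm_smult: assumes "dim_col M > 0" shows "opnorm (c \<cdot>\<^sub>m M) = cmod c * opnorm M"
proof (cases "c = 0")
  case True
  have "opnorm (c \<cdot>\<^sub>m M) \<le> 0" using opnorm_smult_le[OF assms, of c] True by simp
  moreover have "0 \<le> opnorm (c \<cdot>\<^sub>m M)" using opnorm_nonneg assms by simp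
  ultimately show ?thesis using True by simp
next
  case False
  have e: "(1/c) \<cdot>\<^sub>m (c \<cdot>\<^sub>m M) = M" by (rule eq_matI) (use False in auto)
  have "opnorm ((1/c) \<cdot>\<^sub>m (c \<cdot>\<^sub>m M)) \<le> cmod (1/c) * opnorm (c \<cdot>\<^sub>m M)"
    using opnorm_smult_le[of "c \<cdot>\<^sub>m M" "1/c"] assms by simp
  then have "opnorm M \<le> cmod (1/c) * opnorm (c \<cdot>\<^sub>m M)" unfolding e .
  then have "cmod c * opnorm M \<le> opnorm (c \<cdot>\<^sub>m M)"
    using False by (simp add: norm_divide field_simps)
  then show ?thesis using opnorm_smult_le[OF assms, of c] by simp
qed

lemma opnorm_one: assumes "n > 0" shows "opnorm (1\<^sub>m n) = 1"
proof (rule antisym)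
  have mv1: "(1\<^sub>m n :: complex mat) *\<^sub>v x = x" if "x \<in> carrier_vec n" for x
    using that by (rule one_mult_mat_vec)
  show "opnorm (1\<^sub>m n) \<le> 1"
    by (rule opnorm_least) (use assms mv1 in auto)
  show "1 \<le> opnorm (1\<^sub>m n)"
    using opnorm_ge[of "unit_vec n 0" "1\<^sub>m n"] vnorm_unit[of 0 n] assms mv1[of "unit_vec n 0"] by simp
qed

lemma L2_set_sum_ineq: "finite S \<Longrightarrow> L2_set (\<lambda>i. \<Sum>s\<in>S. f s i) A \<le> (\<Sum>s\<in>S. L2_set (f s) A)"
proof (induction S rule: finite_induct)
  case empty then show ?case by (simp add: L2_set_0')
next
  case (insert s S)
  have "L2_set (\<lambda>i. \<Sum>s\<in>insert s S. f s i) A = L2_set (\<lambda>i. f s i + (\<Sum>s\<in>S. f s i)) A"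
    using insert by simp
  also have "\<dots> \<le> L2_set (f s) A + L2_set (\<lambda>i. \<Sum>s\<in>S. f s i) A" by (rule L2_set_triangle_ineq)
  also have "\<dots> \<le> L2_set (f s) A + (\<Sum>s\<in>S. L2_set (f s) A)" using insert by simp
  finally show ?case using insert by simp
qed

lemma opnorm_sum:
  assumes M: "M \<in> carrier_mat r c" and c: "c > 0" and S: "finite S"
    and f: "\<And>s. s \<in> S \<Longrightarrow> f s \<in> carrier_mat r c"
    and e: "\<And>i j. i < r \<Longrightarrow> j < c \<Longrightarrow> M $$ (i,j) = (\<Sum>s\<in>S. f s $$ (i,j))"
  shows "opnorm M \<le> (\<Sum>s\<in>S. opnorm (f s))"
proof (rule opnorm_least)
  show "dim_col M > 0" using M c by simp
  fix x assume x: "x \<in> carrier_vec (dim_col M)" and x1: "vnorm x = 1"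
  have xc: "x \<in> carrier_vec c" using x M by simp
  have ent: "(M *\<^sub>v x) $ i = (\<Sum>s\<in>S. (f s *\<^sub>v x) $ i)" if i: "i < r" for i
  proof -
    have "(M *\<^sub>v x) $ i = (\<Sum>j<c. (\<Sum>s\<in>S. f s $$ (i,j)) * x $ j)"
      using i M xc by (subst mv_index) (auto simp: e)
    also have "\<dots> = (\<Sum>s\<in>S. \<Sum>j<c. f s $$ (i,j) * x $ j)"
      by (simp add: sum_distrib_right sum.swap[of _ S])
    also have "\<dots> = (\<Sum>s\<in>S. (f s *\<^sub>v x) $ i)"
      by (rule sum.cong[OF refl]) (use i f xc in \<open>subst mv_index, auto\<close>)
    finally show ?thesis .
  qed
  have "vnorm (M *\<^sub>v x) = L2_set (\<lambda>i. cmod (\<Sum>s\<in>S. (f s *\<^sub>v x) $ i)) {..<r}"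
    unfolding vnorm_L2 using M ent by (intro L2_set_cong) auto
  also have "\<dots> \<le> L2_set (\<lambda>i. \<Sum>s\<in>S. cmod ((f s *\<^sub>v x) $ i)) {..<r}"
    by (rule L2_set_mono) (auto intro: norm_sum)
  also have "\<dots> \<le> (\<Sum>s\<in>S. L2_set (\<lambda>i. cmod ((f s *\<^sub>v x) $ i)) {..<r})"
    by (rule L2_set_sum_ineq[OF S])
  also have "\<dots> = (\<Sum>s\<in>S. vnorm (f s *\<^sub>v x))"
    unfolding vnorm_L2 using f by (intro sum.cong) auto
  also have "\<dots> \<le> (\<Sum>s\<in>S. opnorm (f s))"
  proof (rule sum_mono)
    fix s assume s: "s \<in> S"
    show "vnorm (f s *\<^sub>v x) \<le> opnorm (f s)"
      using opnorm_ge[of x "f s"] f[OF s] xc x1 by simp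
  qed
  finally show "vnorm (M *\<^sub>v x) \<le> (\<Sum>s\<in>S. opnorm (f s))" .
qed



lemma divmod_pair: fixes a b q :: nat shows "b < q \<Longrightarrow> (a*q+b) div q = a" "b < q \<Longrightarrow> (a*q+b) mod q = b"
  by auto

lemma opnorm_kron:
  assumes M: "M \<in> carrier_mat p p'" and N: "N \<in> carrier_mat q q'" and p': "p' > 0" and q': "q' > 0"
  shows "opnorm (kron M N) \<le> opnorm M * opnorm N"
proof (rule opnorm_least)
  show "dim_col (kron M N) > 0" using M N p' q' by simp
  fix v assume v: "v \<in> carrier_vec (dim_col (kron M N))" and v1: "vnorm v = 1"
  have dv: "dim_vec v = p' * q'" using v M N by simp
  define V where "V c = vec q' (\<lambda>d. v $ (c*q'+d))" for c
  define U where "U c = N *\<^sub>v V c" for c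
  define Z where "Z b = vec p' (\<lambda>c. U c $ b)" for b
  let ?w = "kron M N *\<^sub>v v"
  have went: "?w $ (a*q+b) = (M *\<^sub>v Z b) $ a" if a: "a < p" and b: "b < q" for a b
  proof -
    have i: "a*q+b < p*q"
    proof -
      have "a*q+b < a*q+q" using b by simp
      also have "\<dots> = Suc a * q" by simp
      also have "\<dots> \<le> p * q" using a by (intro mult_right_mono) auto
      finally show ?thesis .
    qed
    have "?w $ (a*q+b) = (\<Sum>j<p'*q'. kron M N $$ (a*q+b, j) * v $ j)"
      using i M N dv by (subst mv_index) auto
    also have "\<dots> = (\<Sum>j<p'*q'. M $$ (a, j div q') * N $$ (b, j mod q') * v $ j)"
      by (rule sum.cong[OF refl]) (use i M N b in \<open>auto simp: divmod_pair\<close>)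
    also have "\<dots> = (\<Sum>c<p'. \<Sum>d<q'. M $$ (a, c) * N $$ (b, d) * v $ (c*q'+d))"
      by (rule sum_pair[THEN trans], intro sum.cong refl) (auto simp: divmod_pair)
    also have "\<dots> = (\<Sum>c<p'. M $$ (a,c) * (Z b) $ c)"
    proof (rule sum.cong[OF refl])
      fix c assume c: "c \<in> {..<p'}"
      have "(Z b) $ c = U c $ b" using c unfolding Z_def by simp
      also have "\<dots> = (\<Sum>d<q'. N $$ (b,d) * V c $ d)"
        unfolding U_def using b N by (subst mv_index) (auto simp: V_def)
      also have "\<dots> = (\<Sum>d<q'. N $$ (b,d) * v $ (c*q'+d))"
        by (rule sum.cong) (auto simp: V_def)
      finally show "(\<Sum>d<q'. M $$ (a, c) * N $$ (b, d) * v $ (c*q'+d)) = M $$ (a,c) * (Z b) $ c"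
        by (simp add: sum_distrib_left mult.assoc)
    qed
    also have "\<dots> = (M *\<^sub>v Z b) $ a"
      using a M by (subst mv_index) (auto simp: Z_def)
    finally show ?thesis .
  qed
  have nM: "0 \<le> opnorm M" using opnorm_nonneg M p' by simp
  have nN: "0 \<le> opnorm N" using opnorm_nonneg N q' by simp
  have "(vnorm ?w)\<^sup>2 = (\<Sum>i<p*q. (cmod (?w $ i))\<^sup>2)"
    unfolding vnorm_sq using M N by simp
  also have "\<dots> = (\<Sum>a<p. \<Sum>b<q. (cmod (?w $ (a*q+b)))\<^sup>2)" by (rule sum_pair)
  also have "\<dots> = (\<Sum>a<p. \<Sum>b<q. (cmod ((M *\<^sub>v Z b) $ a))\<^sup>2)"
    by (intro sum.cong refl) (simp add: went)
  also have "\<dots> = (\<Sum>b<q. (vnorm (M *\<^sub>v Z b))\<^sup>2)"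
    unfolding vnorm_sq using M by (subst sum.swap) simp
  also have "\<dots> \<le> (\<Sum>b<q. (opnorm M * vnorm (Z b))\<^sup>2)"
  proof (rule sum_mono)
    fix b assume "b \<in> {..<q}"
    have "vnorm (M *\<^sub>v Z b) \<le> opnorm M * vnorm (Z b)"
      by (rule opnorm_bound) (use M in \<open>simp add: Z_def\<close>)
    then show "(vnorm (M *\<^sub>v Z b))\<^sup>2 \<le> (opnorm M * vnorm (Z b))\<^sup>2"
      by (intro power_mono) (auto simp: vnorm_nonneg)
  qed
  also have "\<dots> = (opnorm M)\<^sup>2 * (\<Sum>b<q. \<Sum>c<p'. (cmod (U c $ b))\<^sup>2)"
    by (simp add: power_mult_distrib vnorm_sq sum_distrib_left Z_def)
  also have "(\<Sum>b<q. \<Sum>c<p'. (cmod (U c $ b))\<^sup>2) = (\<Sum>c<p'. (vnorm (U c))\<^sup>2)"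
    unfolding vnorm_sq U_def using N by (subst sum.swap) simp
  also have "\<dots> \<le> (\<Sum>c<p'. (opnorm N * vnorm (V c))\<^sup>2)"
  proof (rule sum_mono)
    fix c assume "c \<in> {..<p'}"
    have "vnorm (U c) \<le> opnorm N * vnorm (V c)"
      unfolding U_def by (rule opnorm_bound) (use N in \<open>simp add: V_def\<close>)
    then show "(vnorm (U c))\<^sup>2 \<le> (opnorm N * vnorm (V c))\<^sup>2"
      by (intro power_mono) (auto simp: vnorm_nonneg)
  qed
  also have "\<dots> = (opnorm N)\<^sup>2 * (\<Sum>c<p'. \<Sum>d<q'. (cmod (v $ (c*q'+d)))\<^sup>2)"
    by (simp add: power_mult_distrib vnorm_sq sum_distrib_left V_def)
  also have "(\<Sum>c<p'. \<Sum>d<q'. (cmod (v $ (c*q'+d)))\<^sup>2) = (vnorm v)\<^sup>2"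
    unfolding vnorm_sq dv by (rule sum_pair[symmetric])
  finally have "(vnorm ?w)\<^sup>2 \<le> (opnorm M * opnorm N)\<^sup>2"
    using v1 nM by (simp add: power_mult_distrib mult_left_mono)
  then show "vnorm ?w \<le> opnorm M * opnorm N"
    by (rule power2_le_imp_le) (use nM nN in simp)
qed



definition kv :: "complex vec \<Rightarrow> complex vec \<Rightarrow> complex vec" where
  "kv x y = vec (dim_vec x * dim_vec y) (\<lambda>i. x $ (i div dim_vec y) * y $ (i mod dim_vec y))"

lemma kv_dim[simp]: "dim_vec (kv x y) = dim_vec x * dim_vec y" unfolding kv_def by simp

lemma div_mod_lt: fixes i p q :: nat assumes "i < p*q" shows "i div q < p" "i mod q < q"
proof -
  show "i div q < p" using assms by (simp add: less_mult_imp_div_less)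
  have "q > 0" using assms by (auto intro: gr0I)
  then show "i mod q < q" by simp
qed

lemma kron_kv:
  assumes M: "M \<in> carrier_mat p p'" and N: "N \<in> carrier_mat q q'" and x: "x \<in> carrier_vec p'" and y: "y \<in> carrier_vec q'"
  shows "kron M N *\<^sub>v kv x y = kv (M *\<^sub>v x) (N *\<^sub>v y)"
proof (rule eq_vecI)
  show "dim_vec (kron M N *\<^sub>v kv x y) = dim_vec (kv (M *\<^sub>v x) (N *\<^sub>v y))" using M N by simp
  fix i assume "i < dim_vec (kv (M *\<^sub>v x) (N *\<^sub>v y))"
  then have i: "i < p*q" using M N by simp
  note dm = div_mod_lt[OF i]
  have "(kron M N *\<^sub>v kv x y) $ i = (\<Sum>j<p'*q'. kron M N $$ (i,j) * kv x y $ j)"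
    using i M N x y by (subst mv_index) auto
  also have "\<dots> = (\<Sum>j<p'*q'. (M $$ (i div q, j div q') * x $ (j div q')) * (N $$ (i mod q, j mod q') * y $ (j mod q')))"
    by (rule sum.cong[OF refl]) (use i M N x y div_mod_lt in \<open>auto simp: kv_def\<close>)
  also have "\<dots> = (\<Sum>c<p'. \<Sum>d<q'. (M $$ (i div q, c) * x $ c) * (N $$ (i mod q, d) * y $ d))"
    by (rule sum_pair_divmod)
  also have "\<dots> = (\<Sum>c<p'. M $$ (i div q, c) * x $ c) * (\<Sum>d<q'. N $$ (i mod q, d) * y $ d)"
    by (simp add: sum_product)
  also have "\<dots> = kv (M *\<^sub>v x) (N *\<^sub>v y) $ i"
    using i dm M N x y by (simp add: kv_def scalar_prod_def atLeast0LessThan)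
  finally show "(kron M N *\<^sub>v kv x y) $ i = kv (M *\<^sub>v x) (N *\<^sub>v y) $ i" .
qed

lemma vnorm_kv: "vnorm (kv x y) = vnorm x * vnorm y"
proof -
  have "(\<Sum>i<dim_vec x * dim_vec y. (cmod (kv x y $ i))\<^sup>2)
      = (\<Sum>i<dim_vec x * dim_vec y. (cmod (x $ (i div dim_vec y)))\<^sup>2 * (cmod (y $ (i mod dim_vec y)))\<^sup>2)"
    by (rule sum.cong[OF refl]) (auto simp: kv_def norm_mult power_mult_distrib)
  also have "\<dots> = (\<Sum>a<dim_vec x. \<Sum>b<dim_vec y. (cmod (x $ a))\<^sup>2 * (cmod (y $ b))\<^sup>2)"
    by (rule sum_pair_divmod)
  also have "\<dots> = (\<Sum>a<dim_vec x. (cmod (x $ a))\<^sup>2) * (\<Sum>b<dim_vec y. (cmod (y $ b))\<^sup>2)"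
    by (simp add: sum_product)
  finally show ?thesis unfolding vnorm_def by (simp add: real_sqrt_mult)
qed

fun xp :: "nat \<Rightarrow> complex vec \<Rightarrow> complex vec" where
  "xp 0 x = vec 1 (\<lambda>_. 1)"
| "xp (Suc k) x = kv x (xp k x)"

lemma xp_carrier: "x \<in> carrier_vec n \<Longrightarrow> xp k x \<in> carrier_vec (n^k)"
proof (induction k)
  case 0 then show ?case by simp
next
  case (Suc k)
  then have "dim_vec (xp k x) = n^k" "dim_vec x = n" by auto
  then show ?case unfolding carrier_vec_def by simp
qed

lemma vnorm_xp: "vnorm (xp k x) = vnorm x ^ k"
proof (induction k)
  case 0 then show ?case by (simp add: vnorm_def)
next
  case (Suc k) then show ?case by (simp add: vnorm_kv)
qed

lemma tpow_xp:
  assumes A: "A \<in> carrier_mat n n" and x: "x \<in> carrier_vec n"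
  shows "tpow k A *\<^sub>v xp k x = xp k (A *\<^sub>v x)"
proof (induction k)
  case 0
  have "vec 1 (\<lambda>_. 1) \<in> carrier_vec 1" by simp
  from one_mult_mat_vec[OF this] show ?case by simp
next
  case (Suc k)
  have "tpow (Suc k) A *\<^sub>v xp (Suc k) x = kron A (tpow k A) *\<^sub>v kv x (xp k x)" by simp
  also have "\<dots> = kv (A *\<^sub>v x) (tpow k A *\<^sub>v xp k x)"
    by (rule kron_kv[OF A tpow_carrier[OF A] x xp_carrier[OF x]])
  finally show ?case using Suc by simp
qed

lemma opnorm_tpow_le:
  assumes A: "A \<in> carrier_mat n n" and n: "n > 0"
  shows "opnorm (tpow k A) \<le> opnorm A ^ k"
proof (induction k)
  case 0 then show ?case using opnorm_one[of 1] by simp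
next
  case (Suc k)
  have "opnorm (tpow (Suc k) A) \<le> opnorm A * opnorm (tpow k A)"
    using opnorm_kron[OF A tpow_carrier[OF A, of k] n] n by simp
  also have "\<dots> \<le> opnorm A * opnorm A ^ k"
    using Suc opnorm_nonneg[of A] A n by (intro mult_left_mono) auto
  finally show ?case by simp
qed

lemma opnorm_tpow_ge:
  assumes A: "A \<in> carrier_mat n n" and n: "n > 0"
  shows "opnorm A ^ k \<le> opnorm (tpow k A)"
proof (cases "k = 0")
  case True then show ?thesis using opnorm_one[of 1] by simp
next
  case False
  let ?T = "opnorm (tpow k A)"
  have T0: "0 \<le> ?T" using opnorm_nonneg[of "tpow k A"] tpow_carrier[OF A, of k] n by simp
  have "opnorm A \<le> root k ?T"
  proof (rule opnorm_least)
    show "dim_col A > 0" using A n by simp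
    fix x assume x: "x \<in> carrier_vec (dim_col A)" and x1: "vnorm x = 1"
    have xc: "x \<in> carrier_vec n" using x A by simp
    have "vnorm (A *\<^sub>v x) ^ k = vnorm (tpow k A *\<^sub>v xp k x)"
      using tpow_xp[OF A xc] by (simp add: vnorm_xp)
    also have "\<dots> \<le> ?T"
      by (rule opnorm_ge) (use xp_carrier[OF xc, of k] tpow_carrier[OF A, of k] x1 in \<open>auto simp: vnorm_xp\<close>)
    finally have "vnorm (A *\<^sub>v x) ^ k \<le> ?T" .
    then have "root k (vnorm (A *\<^sub>v x) ^ k) \<le> root k ?T"
      using False real_root_le_iff[of k] by blast
    moreover have "root k (vnorm (A *\<^sub>v x) ^ k) = vnorm (A *\<^sub>v x)"
      using False vnorm_nonneg by (intro real_root_power_cancel) auto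
    ultimately show "vnorm (A *\<^sub>v x) \<le> root k ?T" by simp
  qed
  then have "opnorm A ^ k \<le> root k ?T ^ k"
    using opnorm_nonneg[of A] A n by (intro power_mono) auto
  also have "\<dots> = ?T" using False T0 by (simp add: real_root_pow_pos2)
  finally show ?thesis .
qed



lemma interl_bound:
  assumes A: "A \<in> carrier_mat n n" and n: "n > 0"
  shows "\<forall>Y\<in>set Ys. Y \<in> carrier_mat n n \<and> opnorm Y = 1 \<Longrightarrow> length js = Suc (length Ys) \<Longrightarrow>
    opnorm (interl A js Ys) \<le> opnorm A ^ sum_list js"
proof (induction Ys arbitrary: js)
  case Nil
  then obtain j where "js = [j]" by (cases js) auto
  then show ?case using opnorm_tpow_le[OF A n] by simp
next
  case (Cons Y Ys)
  then obtain j rest where js: "js = j # rest" by (cases js) auto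
  have Y: "Y \<in> carrier_mat n n" "opnorm Y = 1" using Cons.prems by auto
  have Ysc: "\<forall>Z\<in>set Ys. Z \<in> carrier_mat n n" using Cons.prems by auto
  have lr: "length rest = Suc (length Ys)" using Cons.prems js by simp
  have IH: "opnorm (interl A rest Ys) \<le> opnorm A ^ sum_list rest" using Cons js by auto
  let ?e = "sum_list rest + length Ys"
  have ic: "interl A rest Ys \<in> carrier_mat (n^?e) (n^?e)" using interl_carrier[OF A Ysc lr] .
  have pos: "n^?e > 0" "n^j > 0" using n by auto
  have kc: "kron Y (interl A rest Ys) \<in> carrier_mat (n * n^?e) (n * n^?e)" using kron_carrier[OF Y(1) ic] .
  have "opnorm (interl A js (Y#Ys)) = opnorm (kron (tpow j A) (kron Y (interl A rest Ys)))" using js by simp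
  also have "\<dots> \<le> opnorm (tpow j A) * opnorm (kron Y (interl A rest Ys))"
    by (rule opnorm_kron[OF tpow_carrier[OF A] kc]) (use pos n in auto)
  also have "\<dots> \<le> opnorm A ^ j * (opnorm Y * opnorm (interl A rest Ys))"
  proof (rule mult_mono)
    show "opnorm (tpow j A) \<le> opnorm A ^ j" by (rule opnorm_tpow_le[OF A n])
    show "opnorm (kron Y (interl A rest Ys)) \<le> opnorm Y * opnorm (interl A rest Ys)"
      by (rule opnorm_kron[OF Y(1) ic n pos(1)])
    show "0 \<le> opnorm A ^ j" using opnorm_nonneg[of A] A n by simp
    have "dim_col (kron Y (interl A rest Ys)) = n * n^?e" using kc by blast
    then have "dim_col (kron Y (interl A rest Ys)) > 0" using pos n by simp
    then show "0 \<le> opnorm (kron Y (interl A rest Ys))" by (rule opnorm_nonneg)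
  qed
  also have "\<dots> \<le> opnorm A ^ j * opnorm A ^ sum_list rest"
    using Y(2) IH opnorm_nonneg[of A] A n by (intro mult_left_mono) auto
  finally show ?case using js by (simp add: power_add)
qed

lemma smult_one_mat': "(1::complex) \<cdot>\<^sub>m M = M"
  by (rule eq_matI) auto

lemma smult_smult_mat': "(a::complex) \<cdot>\<^sub>m (b \<cdot>\<^sub>m M) = (a * b) \<cdot>\<^sub>m M"
  by (rule eq_matI) auto

lemma interl_replicate:
  assumes B: "B \<in> carrier_mat n n"
  shows "length js = Suc l \<Longrightarrow> interl B js (replicate l (c \<cdot>\<^sub>m B)) = (c^l) \<cdot>\<^sub>m tpow (sum_list js + l) B"
proof (induction l arbitrary: js)
  case 0
  then obtain j where "js = [j]" by (cases js) auto
  then show ?case by (simp add: smult_one_mat')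
next
  case (Suc l)
  then obtain j rest where js: "js = j # rest" by (cases js) auto
  have IH: "interl B rest (replicate l (c \<cdot>\<^sub>m B)) = (c^l) \<cdot>\<^sub>m tpow (sum_list rest + l) B" using Suc js by simp
  have "interl B js (replicate (Suc l) (c \<cdot>\<^sub>m B)) = kron (tpow j B) (kron (c \<cdot>\<^sub>m B) ((c^l) \<cdot>\<^sub>m tpow (sum_list rest + l) B))"
    using js IH by simp
  also have "\<dots> = (c^Suc l) \<cdot>\<^sub>m kron (tpow j B) (kron B (tpow (sum_list rest + l) B))"
    by (simp add: kron_smult_left kron_smult_right smult_smult_mat' mult.commute)
  also have "kron (tpow j B) (kron B (tpow (sum_list rest + l) B)) = tpow (sum_list js + Suc l) B"
  proof -
    have "kron (tpow j B) (kron B (tpow (sum_list rest + l) B)) = kron (tpow j B) (tpow (Suc (sum_list rest + l)) B)"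
      by simp
    also have "\<dots> = tpow (j + Suc (sum_list rest + l)) B" by (rule tpow_add[symmetric])
    finally show ?thesis using js by (simp add: add.assoc)
  qed
  finally show ?case .
qed

lemma interl_indep: "sum_list js = 0 \<Longrightarrow> interl A js Ys = interl B js Ys"
proof (induction Ys arbitrary: js)
  case Nil
  show ?case
  proof (cases js)
    case (Cons j r) then show ?thesis using Nil by (cases r) auto
  qed simp
next
  case (Cons Y Ys)
  then show ?case by (cases js) auto
qed

lemma card_J: "m \<le> k \<Longrightarrow> card {js::nat list. length js = m + 1 \<and> sum_list js = k - m} = k choose m"
proof -
  assume mk: "m \<le> k"
  have "card {js::nat list. length js = m + 1 \<and> sum_list js = k - m} = (k - m + (m+1) - 1) choose (k - m)"
    by (rule card_length_sum_list)
  also have "\<dots> = k choose (k - m)" using mk by simp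
  also have "\<dots> = k choose m" using mk by (simp add: binomial_symmetric[symmetric])
  finally show ?thesis .
qed



lemma perm_map_set:
  assumes s: "\<sigma> permutes {..<m}" and len: "length Ys = m"
  shows "set (map (\<lambda>i. Ys ! \<sigma> i) [0..<m]) \<subseteq> set Ys"
proof
  fix Y assume "Y \<in> set (map (\<lambda>i. Ys ! \<sigma> i) [0..<m])"
  then obtain i where i: "i < m" "Y = Ys ! \<sigma> i" by auto
  moreover have "\<sigma> i < m" using permutes_in_image[OF s, of i] i by simp
  ultimately show "Y \<in> set Ys" using len by auto
qed

lemma perm_map_replicate:
  assumes s: "\<sigma> permutes {..<m}"
  shows "map (\<lambda>i. replicate m X ! \<sigma> i) [0..<m] = replicate m X"
proof (rule nth_equalityI)
  fix i assume "i < length (map (\<lambda>i. replicate m X ! \<sigma> i) [0..<m])"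
  then have i: "i < m" by simp
  have "\<sigma> i < m" using permutes_in_image[OF s, of i] i by simp
  then show "map (\<lambda>i. replicate m X ! \<sigma> i) [0..<m] ! i = replicate m X ! i" using i by simp
qed simp

context
  fixes A :: "complex mat" and n m k :: nat
  assumes A: "A \<in> carrier_mat n n" and m1: "1 \<le> m" and mk: "m \<le> k" and kn: "k \<le> n"
begin

abbreviation "PM \<equiv> {\<sigma>. \<sigma> permutes {..<m}}"
abbreviation "JS \<equiv> {js::nat list. length js = m + 1 \<and> sum_list js = k - m}"

lemma n_pos: "n > 0" using m1 mk kn by simp

lemma card_S: "real (card (PM \<times> JS)) = fact k / fact (k - m)"
proof -
  have "card (PM \<times> JS) = fact m * (k choose m)"
    using card_J[OF mk] by (simp add: card_cartesian_product card_permutations)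
  then have "real (card (PM \<times> JS)) = fact m * of_nat (k choose m)" by simp
  also have "\<dots> = fact k / fact (k - m)" by (rule fact_binomial[OF mk])
  finally show ?thesis .
qed

lemma finite_JS: "finite JS"
proof -
  have "JS = J k m" using J_eq[OF mk] by simp
  then show ?thesis using J_finite by simp
qed

lemma upper:
  assumes len: "length Ys = m" and Ys: "\<forall>X\<in>set Ys. X \<in> carrier_mat n n \<and> opnorm X = 1"
  shows "opnorm (Dm (tpow k) A Ys) \<le> fact k / fact (k - m) * opnorm A ^ (k - m)"
proof -
  have Ysc: "\<forall>X\<in>set Ys. X \<in> carrier_mat n n" using Ys by auto
  let ?f = "\<lambda>(\<sigma>, js). interl A js (map (\<lambda>i. Ys ! \<sigma> i) [0..<m])"
  let ?M = "Dm (tpow k) A Ys"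
  have M: "?M = mat (n ^ k) (n ^ k) (\<lambda>ij.
             \<Sum>\<sigma>\<in>PM. \<Sum>js\<in>JS. interl A js (map (\<lambda>i. Ys ! \<sigma> i) [0..<m]) $$ ij)"
    by (rule part1[OF A len Ysc mk])
  have fin: "finite (PM \<times> JS)" using finite_permutations[of "{..<m}"] finite_JS by simp
  have fc: "?f s \<in> carrier_mat (n^k) (n^k)" if s: "s \<in> PM \<times> JS" for s
  proof -
    obtain \<sigma> js where sj: "s = (\<sigma>, js)" "\<sigma> \<in> PM" "js \<in> JS" using s by auto
    have c: "\<forall>Y\<in>set (map (\<lambda>i. Ys ! \<sigma> i) [0..<m]). Y \<in> carrier_mat n n"
      using perm_map_set[of \<sigma> m Ys] sj len Ysc by auto
    have "interl A js (map (\<lambda>i. Ys ! \<sigma> i) [0..<m]) \<in> carrier_mat (n^(sum_list js + length (map (\<lambda>i. Ys ! \<sigma> i) [0..<m]))) (n^(sum_list js + length (map (\<lambda>i. Ys ! \<sigma> i) [0..<m])))"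
      by (rule interl_carrier[OF A c]) (use sj in simp)
    moreover have "sum_list js + length (map (\<lambda>i. Ys ! \<sigma> i) [0..<m]) = k" using sj mk by simp
    ultimately show ?thesis using sj by simp
  qed
  have "opnorm ?M \<le> (\<Sum>s\<in>PM \<times> JS. opnorm (?f s))"
  proof (rule opnorm_sum[OF _ _ fin fc])
    show "?M \<in> carrier_mat (n^k) (n^k)" unfolding M by simp
    show "n^k > 0" using n_pos by simp
    fix i j assume "i < n^k" "j < n^k"
    then show "?M $$ (i,j) = (\<Sum>s\<in>PM \<times> JS. ?f s $$ (i,j))"
      unfolding M by (simp add: sum.cartesian_product case_prod_unfold)
  qed auto
  also have "\<dots> \<le> (\<Sum>s\<in>PM \<times> JS. opnorm A ^ (k - m))"
  proof (rule sum_mono)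
    fix s assume s: "s \<in> PM \<times> JS"
    obtain \<sigma> js where sj: "s = (\<sigma>, js)" "\<sigma> \<in> PM" "js \<in> JS" using s by auto
    have c: "\<forall>Y\<in>set (map (\<lambda>i. Ys ! \<sigma> i) [0..<m]). Y \<in> carrier_mat n n \<and> opnorm Y = 1"
      using perm_map_set[of \<sigma> m Ys] sj len Ys by auto
    have "opnorm (interl A js (map (\<lambda>i. Ys ! \<sigma> i) [0..<m])) \<le> opnorm A ^ sum_list js"
      by (rule interl_bound[OF A n_pos c]) (use sj in simp)
    then show "opnorm (?f s) \<le> opnorm A ^ (k - m)" using sj by simp
  qed
  also have "\<dots> = fact k / fact (k - m) * opnorm A ^ (k - m)"
    using card_S by simp
  finally show ?thesis .
qed

lemma Dm_replicate:
  assumes B: "B \<in> carrier_mat n n" and c: "X0 = c \<cdot>\<^sub>m B"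
    and indep: "\<And>js Ys. js \<in> JS \<Longrightarrow> interl A js Ys = interl B js Ys"
  shows "Dm (tpow k) A (replicate m X0) = (of_nat (card (PM \<times> JS)) * c^m) \<cdot>\<^sub>m tpow k B"
proof -
  have X0: "X0 \<in> carrier_mat n n" using B c by simp
  have M: "Dm (tpow k) A (replicate m X0) = mat (n ^ k) (n ^ k) (\<lambda>ij.
             \<Sum>\<sigma>\<in>PM. \<Sum>js\<in>JS. interl A js (map (\<lambda>i. replicate m X0 ! \<sigma> i) [0..<m]) $$ ij)"
    by (rule part1[OF A _ _ mk]) (use X0 in auto)
  have fin: "finite (PM \<times> JS)" using finite_permutations[of "{..<m}"] finite_JS by simp
  show ?thesis
  proof (rule eq_matI)
    fix i j assume i: "i < dim_row ((of_nat (card (PM \<times> JS)) * c^m) \<cdot>\<^sub>m tpow k B)"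
      and j: "j < dim_col ((of_nat (card (PM \<times> JS)) * c^m) \<cdot>\<^sub>m tpow k B)"
    have tc: "tpow k B \<in> carrier_mat (n^k) (n^k)" by (rule tpow_carrier[OF B])
    then have i': "i < n^k" and j': "j < n^k" using i j by auto
    have inner: "interl A js (map (\<lambda>i. replicate m X0 ! \<sigma> i) [0..<m]) $$ (i,j) = c^m * tpow k B $$ (i,j)"
      if s: "\<sigma> \<in> PM" and js: "js \<in> JS" for \<sigma> js
    proof -
      have "interl A js (map (\<lambda>i. replicate m X0 ! \<sigma> i) [0..<m]) = interl B js (replicate m (c \<cdot>\<^sub>m B))"
        using perm_map_replicate[of \<sigma> m X0] s indep[OF js] c by simp
      also have "\<dots> = c^m \<cdot>\<^sub>m tpow (sum_list js + m) B"
        by (rule interl_replicate[OF B]) (use js in simp)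
      also have "sum_list js + m = k" using js mk by simp
      finally show ?thesis using tc i' j' by simp
    qed
    have "Dm (tpow k) A (replicate m X0) $$ (i,j) = (\<Sum>\<sigma>\<in>PM. \<Sum>js\<in>JS. interl A js (map (\<lambda>i. replicate m X0 ! \<sigma> i) [0..<m]) $$ (i,j))"
      unfolding M using i' j' by (simp only: index_mat(1) split)
    also have "\<dots> = (\<Sum>\<sigma>\<in>PM. \<Sum>js\<in>JS. c^m * tpow k B $$ (i,j))"
      by (intro sum.cong refl inner) auto
    also have "\<dots> = (\<Sum>s\<in>PM \<times> JS. c^m * tpow k B $$ (i,j))"
      by (simp add: card_cartesian_product)
    also have "\<dots> = ((of_nat (card (PM \<times> JS)) * c^m) \<cdot>\<^sub>m tpow k B) $$ (i,j)"
      using tc i' j' by simp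
    finally show "Dm (tpow k) A (replicate m X0) $$ (i,j) = ((of_nat (card (PM \<times> JS)) * c^m) \<cdot>\<^sub>m tpow k B) $$ (i,j)" .
  qed (use M tpow_carrier[OF B, of k] in auto)
qed

lemma lower:
  "\<exists>Ys. length Ys = m \<and> (\<forall>X\<in>set Ys. X \<in> carrier_mat n n \<and> opnorm X = 1) \<and>
     fact k / fact (k - m) * opnorm A ^ (k - m) \<le> opnorm (Dm (tpow k) A Ys)"
proof (cases "opnorm A = 0")
  case False
  have a0: "opnorm A > 0" using False opnorm_nonneg[of A] A n_pos by simp
  let ?c = "complex_of_real (1 / opnorm A)"
  let ?X0 = "?c \<cdot>\<^sub>m A"
  have X0: "?X0 \<in> carrier_mat n n" "opnorm ?X0 = 1"
    using A opnorm_smult[of A ?c] n_pos a0 by (auto simp: norm_divide)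
  have D: "Dm (tpow k) A (replicate m ?X0) = (of_nat (card (PM \<times> JS)) * ?c^m) \<cdot>\<^sub>m tpow k A"
    by (rule Dm_replicate[OF A refl]) simp
  have tk: "dim_col (tpow k A) > 0" using tpow_carrier[OF A, of k] n_pos by simp
  have "opnorm (Dm (tpow k) A (replicate m ?X0)) = real (card (PM \<times> JS)) * (1 / opnorm A)^m * opnorm (tpow k A)"
    unfolding D using opnorm_smult[OF tk] a0 by (simp add: norm_mult norm_power norm_divide)
  also have "\<dots> \<ge> real (card (PM \<times> JS)) * (1 / opnorm A)^m * opnorm A ^ k"
    using opnorm_tpow_ge[OF A n_pos, of k] a0 by (intro mult_left_mono) auto
  finally have ge: "real (card (PM \<times> JS)) * (1 / opnorm A)^m * opnorm A ^ k \<le> opnorm (Dm (tpow k) A (replicate m ?X0))" .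
  have "opnorm A ^ k = opnorm A ^ m * opnorm A ^ (k - m)" using mk by (simp add: power_add[symmetric])
  then have "real (card (PM \<times> JS)) * (1 / opnorm A)^m * opnorm A ^ k = fact k / fact (k - m) * opnorm A ^ (k - m)"
    using card_S a0 by (simp add: power_one_over field_simps)
  then show ?thesis using ge X0 by (intro exI[of _ "replicate m ?X0"]) auto
next
  case True
  let ?I = "1\<^sub>m n :: complex mat"
  have I: "?I \<in> carrier_mat n n" "opnorm ?I = 1" using opnorm_one n_pos by auto
  have dk: "dim_col (Dm (tpow k) A (replicate m ?I)) = n^k"
    using part1[OF A _ _ mk, of "replicate m ?I"] I by auto
  show ?thesis
  proof (cases "k = m")
    case False
    then have "k - m > 0" using mk by simp
    then have T0: "fact k / fact (k - m) * opnorm A ^ (k - m) = 0" using True by simp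
    have "0 \<le> opnorm (Dm (tpow k) A (replicate m ?I))" using dk n_pos by (intro opnorm_nonneg) simp
    then have "fact k / fact (k - m) * opnorm A ^ (k - m) \<le> opnorm (Dm (tpow k) A (replicate m ?I))"
      unfolding T0 .
    then show ?thesis using I by (intro exI[of _ "replicate m ?I"]) auto
  next
    case km: True
    have D: "Dm (tpow k) A (replicate m ?I) = (of_nat (card (PM \<times> JS)) * 1^m) \<cdot>\<^sub>m tpow k ?I"
    proof (rule Dm_replicate[OF I(1)])
      show "?I = 1 \<cdot>\<^sub>m ?I" by (simp add: smult_one_mat')
      fix js Ys assume "js \<in> JS"
      then have "sum_list js = 0" using km by simp
      then show "interl A js Ys = interl ?I js Ys" by (rule interl_indep)
    qed
    have tk: "dim_col (tpow k ?I) > 0" using tpow_carrier[OF I(1), of k] n_pos by simp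
    have "opnorm (Dm (tpow k) A (replicate m ?I)) = real (card (PM \<times> JS)) * opnorm (tpow k ?I)"
      unfolding D using opnorm_smult[OF tk] by simp
    also have "\<dots> \<ge> real (card (PM \<times> JS)) * 1"
      using opnorm_tpow_ge[OF I(1) n_pos, of k] I(2) by (intro mult_left_mono) auto
    finally have "real (card (PM \<times> JS)) \<le> opnorm (Dm (tpow k) A (replicate m ?I))" by simp
    moreover have "fact k / fact (k - m) * opnorm A ^ (k - m) = real (card (PM \<times> JS))"
      using card_S km by simp
    ultimately show ?thesis using I by (intro exI[of _ "replicate m ?I"]) auto
  qed
qed

lemma part2: "Dm_norm (tpow k) n m A = fact k / fact (k - m) * opnorm A ^ (k - m)"
proof -
  let ?W = "{opnorm (Dm (tpow k) A Xs) | Xs. length Xs = m \<and> (\<forall>X\<in>set Xs. X \<in> carrier_mat n n \<and> opnorm X = 1)}"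
  let ?T = "fact k / fact (k - m) * opnorm A ^ (k - m)"
  obtain Ys where Ys: "length Ys = m" "\<forall>X\<in>set Ys. X \<in> carrier_mat n n \<and> opnorm X = 1"
    "?T \<le> opnorm (Dm (tpow k) A Ys)" using lower by blast
  have up: "\<forall>w\<in>?W. w \<le> ?T" using upper by blast
  have "opnorm (Dm (tpow k) A Ys) \<le> ?T" using upper[OF Ys(1,2)] .
  then have "opnorm (Dm (tpow k) A Ys) = ?T" using Ys(3) by simp
  moreover have "opnorm (Dm (tpow k) A Ys) \<in> ?W" using Ys(1,2) by blast
  ultimately have "?T \<in> ?W" by simp
  then have "Sup ?W = ?T" using up by (intro cSup_eq_maximum) auto
  then show ?thesis unfolding Dm_norm_def .
qed

end


theorem lemma3p4:
  fixes A :: "complex mat" and Xs :: "complex mat list" and n m k :: nat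
  assumes "A \<in> carrier_mat n n"
    and "length Xs = m"
    and "\<forall>X\<in>set Xs. X \<in> carrier_mat n n"
    and "1 \<le> m" and "m \<le> k" and "k \<le> n"
  shows "Dm (tpow k) A Xs =
           mat (n ^ k) (n ^ k) (\<lambda>ij.
             \<Sum>\<sigma>\<in>{\<sigma>. \<sigma> permutes {..<m}}.
               \<Sum>js\<in>{js. length js = m + 1 \<and> sum_list js = k - m}.
                 interl A js (map (\<lambda>i. Xs ! \<sigma> i) [0..<m]) $$ ij)
         \<and> Dm_norm (tpow k) n m A = fact k / fact (k - m) * opnorm A ^ (k - m)"
proof
  show "Dm (tpow k) A Xs =
           mat (n ^ k) (n ^ k) (\<lambda>ij.
             \<Sum>\<sigma>\<in>{\<sigma>. \<sigma> permutes {..<m}}.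
               \<Sum>js\<in>{js. length js = m + 1 \<and> sum_list js = k - m}.
                 interl A js (map (\<lambda>i. Xs ! \<sigma> i) [0..<m]) $$ ij)"
    by (rule part1[OF assms(1,2,3,5)])
  show "Dm_norm (tpow k) n m A = fact k / fact (k - m) * opnorm A ^ (k - m)"
    by (rule part2[OF assms(1,4,5,6)])
qed

end
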